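(* Let $\alpha_1\ge\alpha_2\ge\dots>0$ with $\sum_{n\ge1}\alpha_n<\infty$, let $R_n=\sum_{i=n+1}^\infty\alpha_i$ for $n\ge0$, and suppose $\alpha_n>R_n$ for every $n\ge1$. Let $r(t)=\prod_{n=1}^\infty\cos(\alpha_nt)$ and $\sigma^2=-r''(0)=\sum_n\alpha_n^2$. For $T>0$ define $M=M_T$ by $R_M<\frac1T\le R_{M-1}$. Then there exist constants $C_1,C_2>0$ and $T_0>0$ such that for all $T\ge T_0$, \[ C_1T^22^{-M}\le T\int_{0}^T \left(1-\frac{t}{T}\right) \left(r(t)+\frac{r''(t)}{\sigma^2}\right)^2 dt \le C_2T^22^{-M}. \]
   Context: $r$ is the covariance of the stationary Gaussian process whose spectral measure is the infinite convolution of the symmetrised atoms $\frac12(\delta_{\alpha_n}+\delta_{-\alpha_n})$. *)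

theory Defs
  imports "HOL-Analysis.Analysis"
begin

text \<open>The sequence alpha is indexed from 1 (alpha 0 is irrelevant).\<close>

definition tailsum :: "(nat \<Rightarrow> real) \<Rightarrow> nat \<Rightarrow> real" where
  "tailsum \<alpha> n = (\<Sum>i. \<alpha> (i + n + 1))"

definition cov :: "(nat \<Rightarrow> real) \<Rightarrow> real \<Rightarrow> real" where
  "cov \<alpha> t = (\<Prod>n. cos (\<alpha> (Suc n) * t))"

definition M_T :: "(nat \<Rightarrow> real) \<Rightarrow> real \<Rightarrow> nat" where
  "M_T \<alpha> T = (THE M. 1 \<le> M \<and> tailsum \<alpha> M < 1 / T \<and> 1 / T \<le> tailsum \<alpha> (M - 1))"

end

theory Submission
  imports Defs
begin


fun Ex :: "(nat \<Rightarrow> real) \<Rightarrow> nat \<Rightarrow> nat \<Rightarrow> (real \<Rightarrow> real) \<Rightarrow> real" where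
  "Ex a 0 k h = h 0"
| "Ex a (Suc m) k h = (Ex a m (Suc k) (\<lambda>z. h (z + a k)) + Ex a m (Suc k) (\<lambda>z. h (z - a k))) / 2"

lemma Ex_add: "Ex a m k (\<lambda>x. f x + g x) = Ex a m k f + Ex a m k g"
  by (induction m arbitrary: k f g) (auto simp: field_simps)

lemma Ex_cmult: "Ex a m k (\<lambda>x. c * f x) = c * Ex a m k f"
  by (induction m arbitrary: k f) (auto simp: field_simps)

lemma Ex_const: "Ex a m k (\<lambda>x. c) = c"
  by (induction m arbitrary: k) auto

lemma Ex_diff: "Ex a m k (\<lambda>x. f x - g x) = Ex a m k f - Ex a m k g"
  using Ex_add[of a m k f "\<lambda>x. - g x"] Ex_cmult[of a m k "-1" g] by simp

lemma Ex_divide: "Ex a m k (\<lambda>x. f x / c) = Ex a m k f / c"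
  using Ex_cmult[of a m k "1/c" f] by simp

lemma Ex_mono: "(\<And>x. f x \<le> g x) \<Longrightarrow> Ex a m k f \<le> Ex a m k g"
  by (induction m arbitrary: k f g) (auto simp: add_mono divide_right_mono)

lemma Ex_mono_supp:
  assumes "\<And>i. a i \<ge> 0"
  shows "(\<And>x. \<bar>x\<bar> \<le> (\<Sum>i\<in>{k..<k+m}. a i) \<Longrightarrow> f x \<le> g x) \<Longrightarrow> Ex a m k f \<le> Ex a m k g"
proof (induction m arbitrary: k f g)
  case 0
  then show ?case by simp
next
  case (Suc m)
  have s: "(\<Sum>i\<in>{k..<k+Suc m}. a i) = a k + (\<Sum>i\<in>{Suc k..<Suc k+m}. a i)"
    by (simp add: sum.atLeast_Suc_lessThan)
  have "Ex a m (Suc k) (\<lambda>z. f (z + a k)) \<le> Ex a m (Suc k) (\<lambda>z. g (z + a k))"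
    by (rule Suc.IH) (rule Suc.prems, use s assms[of k] in auto)
  moreover have "Ex a m (Suc k) (\<lambda>z. f (z - a k)) \<le> Ex a m (Suc k) (\<lambda>z. g (z - a k))"
    by (rule Suc.IH) (rule Suc.prems, use s assms[of k] in auto)
  ultimately show ?case by simp
qed

lemma Ex_neg: "Ex a m k (\<lambda>x. f (- x)) = Ex a m k f"
proof (induction m arbitrary: k f)
  case 0
  then show ?case by simp
next
  case (Suc m)
  have 1: "Ex a m (Suc k) (\<lambda>z. f (- (z + a k))) = Ex a m (Suc k) (\<lambda>z. f (z - a k))"
    using Suc.IH[of "Suc k" "\<lambda>z. f (z - a k)"] by (simp add: algebra_simps)
  have 2: "Ex a m (Suc k) (\<lambda>z. f (- (z - a k))) = Ex a m (Suc k) (\<lambda>z. f (z + a k))"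
    using Suc.IH[of "Suc k" "\<lambda>z. f (z + a k)"] by (simp add: algebra_simps)
  show ?case using 1 2 by simp
qed

lemma Ex_comm: "Ex a m k (\<lambda>x. Ex b n j (\<lambda>y. H x y)) = Ex b n j (\<lambda>y. Ex a m k (\<lambda>x. H x y))"
proof (induction m arbitrary: k H)
  case 0
  then show ?case by simp
next
  case (Suc m)
  show ?case
    by (simp add: Suc.IH Ex_add Ex_divide)
qed

lemma Ex_deriv:
  assumes "\<And>x t. ((\<lambda>t. h t x) has_real_derivative h' t x) (at t)"
  shows "((\<lambda>t. Ex a m k (h t)) has_real_derivative Ex a m k (h' t)) (at t)"
  using assms
proof (induction m arbitrary: k h h')
  case 0
  then show ?case by simp
next
  case (Suc m)
  have 1: "((\<lambda>t. Ex a m (Suc k) (\<lambda>z. h t (z + a k))) has_real_derivative Ex a m (Suc k) (\<lambda>z. h' t (z + a k))) (at t)"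
    by (rule Suc.IH[where h="\<lambda>t z. h t (z + a k)"]) (rule Suc.prems)
  have 2: "((\<lambda>t. Ex a m (Suc k) (\<lambda>z. h t (z - a k))) has_real_derivative Ex a m (Suc k) (\<lambda>z. h' t (z - a k))) (at t)"
    by (rule Suc.IH[where h="\<lambda>t z. h t (z - a k)"]) (rule Suc.prems)
  show ?case
    using DERIV_cdivide[OF DERIV_add[OF 1 2], of 2] by simp
qed

lemma Ex_has_integral:
  assumes "\<And>x. ((\<lambda>t. h t x) has_integral I x) S"
  shows "((\<lambda>t. Ex a m k (h t)) has_integral Ex a m k I) S"
  using assms
proof (induction m arbitrary: k h I)
  case 0
  then show ?case by simp
next
  case (Suc m)
  have 1: "((\<lambda>t. Ex a m (Suc k) (\<lambda>z. h t (z + a k))) has_integral Ex a m (Suc k) (\<lambda>z. I (z + a k))) S"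
    by (rule Suc.IH[where h="\<lambda>t z. h t (z + a k)"]) (rule Suc.prems)
  have 2: "((\<lambda>t. Ex a m (Suc k) (\<lambda>z. h t (z - a k))) has_integral Ex a m (Suc k) (\<lambda>z. I (z - a k))) S"
    by (rule Suc.IH[where h="\<lambda>t z. h t (z - a k)"]) (rule Suc.prems)
  show ?case
    using has_integral_divide[OF has_integral_add[OF 1 2], of 2] by simp
qed

lemma Ex_cos: "Ex a m k (\<lambda>x. cos (t * (x + c))) = cos (t * c) * (\<Prod>i\<in>{k..<k+m}. cos (a i * t))"
proof (induction m arbitrary: k c)
  case 0
  then show ?case by simp
next
  case (Suc m)
  have p: "(\<Prod>i\<in>{k..<k+Suc m}. cos (a i * t)) = cos (a k * t) * (\<Prod>i\<in>{Suc k..<Suc k+m}. cos (a i * t))"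
    by (simp add: prod.atLeast_Suc_lessThan)
  have 1: "Ex a m (Suc k) (\<lambda>z. cos (t * (z + a k + c))) = cos (t * (a k + c)) * (\<Prod>i\<in>{Suc k..<Suc k+m}. cos (a i * t))"
    using Suc.IH[of "Suc k" "a k + c"] by (simp add: add.assoc)
  have 2: "Ex a m (Suc k) (\<lambda>z. cos (t * (z - a k + c))) = cos (t * (c - a k)) * (\<Prod>i\<in>{Suc k..<Suc k+m}. cos (a i * t))"
    using Suc.IH[of "Suc k" "c - a k"] by (simp add: algebra_simps)
  have c: "cos (t * (a k + c)) + cos (t * (c - a k)) = 2 * cos (t * c) * cos (a k * t)"
    by (simp add: cos_add cos_diff algebra_simps)
  define P where "P = (\<Prod>i\<in>{Suc k..<Suc k+m}. cos (a i * t))"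
  have "(cos (t * (a k + c)) * P + cos (t * (c - a k)) * P) / 2
      = (cos (t * (a k + c)) + cos (t * (c - a k))) * P / 2"
    by (simp add: algebra_simps)
  also have "\<dots> = cos (t * c) * (cos (a k * t) * P)"
    unfolding c by simp
  finally show ?case
    unfolding Ex.simps 1 2 p P_def[symmetric] .
qed


fun Ez :: "(nat \<Rightarrow> real) \<Rightarrow> nat \<Rightarrow> nat \<Rightarrow> (real \<Rightarrow> real) \<Rightarrow> real" where
  "Ez a 0 k h = h 0"
| "Ez a (Suc m) k h = (Ez a m (Suc k) (\<lambda>z. h (z + 2 * a k)) + 2 * Ez a m (Suc k) h
      + Ez a m (Suc k) (\<lambda>z. h (z - 2 * a k))) / 4"

lemma Ex_pair: "Ex a m k (\<lambda>x. Ex a m k (\<lambda>y. H (x - y))) = Ez a m k H"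
proof (induction m arbitrary: k H)
  case 0
  then show ?case by simp
next
  case (Suc m)
  have I1: "Ex a m (Suc k) (\<lambda>x. Ex a m (Suc k) (\<lambda>y. H (x - y))) = Ez a m (Suc k) H"
    by (rule Suc.IH)
  have I2: "Ex a m (Suc k) (\<lambda>x. Ex a m (Suc k) (\<lambda>y. H (x - y + 2 * a k))) = Ez a m (Suc k) (\<lambda>z. H (z + 2 * a k))"
    using Suc.IH[of "Suc k" "\<lambda>z. H (z + 2 * a k)"] by simp
  have I3: "Ex a m (Suc k) (\<lambda>x. Ex a m (Suc k) (\<lambda>y. H (x - y - 2 * a k))) = Ez a m (Suc k) (\<lambda>z. H (z - 2 * a k))"
    using Suc.IH[of "Suc k" "\<lambda>z. H (z - 2 * a k)"] by simp
  show ?case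
    using I1 I2 I3 apply (simp add: Ex_add Ex_divide algebra_simps)
    by (simp add: field_simps)
qed

lemma Ez_mono: "(\<And>x. f x \<le> g x) \<Longrightarrow> Ez a m k f \<le> Ez a m k g"
proof (induction m arbitrary: k f g)
  case 0
  then show ?case by simp
next
  case (Suc m)
  have "Ez a m (Suc k) (\<lambda>z. f (z + 2 * a k)) \<le> Ez a m (Suc k) (\<lambda>z. g (z + 2 * a k))"
    "Ez a m (Suc k) f \<le> Ez a m (Suc k) g"
    "Ez a m (Suc k) (\<lambda>z. f (z - 2 * a k)) \<le> Ez a m (Suc k) (\<lambda>z. g (z - 2 * a k))"
    by (rule Suc.IH, rule Suc.prems)+
  then show ?case by simp
qed

lemma Ez_const: "Ez a m k (\<lambda>x. c) = c"
  by (induction m arbitrary: k) auto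

lemma Ez_mono_supp:
  assumes "\<And>i. a i \<ge> 0"
  shows "(\<And>x. \<bar>x\<bar> \<le> 2 * (\<Sum>i\<in>{k..<k+m}. a i) \<Longrightarrow> f x \<le> g x) \<Longrightarrow> Ez a m k f \<le> Ez a m k g"
proof (induction m arbitrary: k f g)
  case 0
  then show ?case by simp
next
  case (Suc m)
  have s: "(\<Sum>i\<in>{k..<k+Suc m}. a i) = a k + (\<Sum>i\<in>{Suc k..<Suc k+m}. a i)"
    by (simp add: sum.atLeast_Suc_lessThan)
  have "Ez a m (Suc k) (\<lambda>z. f (z + 2 * a k)) \<le> Ez a m (Suc k) (\<lambda>z. g (z + 2 * a k))"
    by (rule Suc.IH) (rule Suc.prems, use s assms[of k] in auto)
  moreover have "Ez a m (Suc k) (\<lambda>z. f (z - 2 * a k)) \<le> Ez a m (Suc k) (\<lambda>z. g (z - 2 * a k))"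
    by (rule Suc.IH) (rule Suc.prems, use s assms[of k] in auto)
  moreover have "Ez a m (Suc k) f \<le> Ez a m (Suc k) g"
    by (rule Suc.IH) (rule Suc.prems, use s assms[of k] in auto)
  ultimately show ?case by simp
qed

lemma Ex_sq: "Ex a m k (\<lambda>x. (x + c)^2) = c^2 + (\<Sum>i\<in>{k..<k+m}. a i ^ 2)"
proof (induction m arbitrary: k c)
  case 0
  then show ?case by simp
next
  case (Suc m)
  have s: "(\<Sum>i\<in>{k..<k+Suc m}. a i ^ 2) = a k ^ 2 + (\<Sum>i\<in>{Suc k..<Suc k+m}. a i ^ 2)"
    by (simp add: sum.atLeast_Suc_lessThan)
  have 1: "Ex a m (Suc k) (\<lambda>z. (z + a k + c)^2) = (a k + c)^2 + (\<Sum>i\<in>{Suc k..<Suc k+m}. a i ^ 2)"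
    using Suc.IH[of "Suc k" "a k + c"] by (simp add: add.assoc)
  have 2: "Ex a m (Suc k) (\<lambda>z. (z - a k + c)^2) = (c - a k)^2 + (\<Sum>i\<in>{Suc k..<Suc k+m}. a i ^ 2)"
    using Suc.IH[of "Suc k" "c - a k"] by (simp add: algebra_simps)
  show ?case
    unfolding Ex.simps 1 2 s by (simp add: power2_eq_square algebra_simps)
qed

lemma Ex_4: "Ex a m k (\<lambda>x. (x + c)^4) = c^4 + 6 * c^2 * (\<Sum>i\<in>{k..<k+m}. a i ^ 2)
   + 3 * (\<Sum>i\<in>{k..<k+m}. a i ^ 2)^2 - 2 * (\<Sum>i\<in>{k..<k+m}. a i ^ 4)"
proof (induction m arbitrary: k c)
  case 0
  then show ?case by simp
next
  case (Suc m)
  define S2 where "S2 = (\<Sum>i\<in>{Suc k..<Suc k+m}. a i ^ 2)"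
  define S4 where "S4 = (\<Sum>i\<in>{Suc k..<Suc k+m}. a i ^ 4)"
  have s: "(\<Sum>i\<in>{k..<k+Suc m}. a i ^ 2) = a k ^ 2 + S2"
    "(\<Sum>i\<in>{k..<k+Suc m}. a i ^ 4) = a k ^ 4 + S4"
    by (simp_all add: sum.atLeast_Suc_lessThan S2_def S4_def)
  have 1: "Ex a m (Suc k) (\<lambda>z. (z + a k + c)^4) = (a k + c)^4 + 6 * (a k + c)^2 * S2 + 3 * S2^2 - 2 * S4"
    using Suc.IH[of "Suc k" "a k + c"] by (simp add: add.assoc S2_def S4_def)
  have 2: "Ex a m (Suc k) (\<lambda>z. (z - a k + c)^4) = (c - a k)^4 + 6 * (c - a k)^2 * S2 + 3 * S2^2 - 2 * S4"
    using Suc.IH[of "Suc k" "c - a k"] by (simp add: algebra_simps S2_def S4_def)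
  show ?case
    unfolding Ex.simps 1 2 s by (simp add: field_simps power2_eq_square power4_eq_xxxx)
qed


lemma Ex_nonneg: "(\<And>x. 0 \<le> f x) \<Longrightarrow> 0 \<le> Ex a m k f"
  using Ex_mono[of "\<lambda>x. 0" f a m k] by (simp add: Ex_const)

lemma Ex_cluster:
  assumes a0: "\<And>i. a i \<ge> 0"
    and Psi0: "\<And>x y. \<Psi> x y \<ge> 0"
    and Bnd: "\<And>n. (\<Sum>i\<in>{M..<M+n}. a i) \<le> B"
    and near: "\<And>x y. \<bar>x - y\<bar> \<le> 2 * B \<Longrightarrow> \<psi> x \<le> \<Psi> x y"
  shows "j \<le> M \<Longrightarrow> M \<le> j + m \<Longrightarrow>
    Ex a m j (\<lambda>x. \<psi> (x + c)) / 2^(M - j) \<le> Ex a m j (\<lambda>x. Ex a m j (\<lambda>y. \<Psi> (x + c) (y + c)))"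
proof (induction m arbitrary: j c)
  case 0
  then have "j = M" by simp
  have "0 \<le> B" using Bnd[of 0] by simp
  then show ?case using near[of c c] \<open>j = M\<close> by simp
next
  case (Suc m)
  show ?case
  proof (cases "j = M")
    case True
    have "Ex a (Suc m) M (\<lambda>x. \<psi> (x + c)) \<le> Ex a (Suc m) M (\<lambda>x. Ex a (Suc m) M (\<lambda>y. \<Psi> (x + c) (y + c)))"
    proof (rule Ex_mono_supp[OF a0])
      fix x assume x: "\<bar>x\<bar> \<le> (\<Sum>i\<in>{M..<M + Suc m}. a i)"
      have "Ex a (Suc m) M (\<lambda>y. \<psi> (x + c)) \<le> Ex a (Suc m) M (\<lambda>y. \<Psi> (x + c) (y + c))"
      proof (rule Ex_mono_supp[OF a0])
        fix y assume y: "\<bar>y\<bar> \<le> (\<Sum>i\<in>{M..<M + Suc m}. a i)"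
        show "\<psi> (x + c) \<le> \<Psi> (x + c) (y + c)"
          apply (rule near)
          using x y Bnd[of "Suc m"] by simp
      qed
      then show "\<psi> (x + c) \<le> Ex a (Suc m) M (\<lambda>y. \<Psi> (x + c) (y + c))"
        by (simp add: Ex_const)
    qed
    then show ?thesis using True by simp
  next
    case False
    then have jM: "Suc j \<le> M" "M \<le> Suc j + m" using Suc.prems by auto
    have pw: "(2::real)^(M - j) = 2 * 2^(M - Suc j)"
      using jM by (metis Suc_diff_Suc Suc_le_lessD power_Suc)
    define c1 where "c1 = c + a j"
    define c2 where "c2 = c - a j"
    have IH1: "Ex a m (Suc j) (\<lambda>x. \<psi> (x + c1)) / 2^(M - Suc j) \<le> Ex a m (Suc j) (\<lambda>x. Ex a m (Suc j) (\<lambda>y. \<Psi> (x + c1) (y + c1)))"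
      using Suc.IH[OF jM] .
    have IH2: "Ex a m (Suc j) (\<lambda>x. \<psi> (x + c2)) / 2^(M - Suc j) \<le> Ex a m (Suc j) (\<lambda>x. Ex a m (Suc j) (\<lambda>y. \<Psi> (x + c2) (y + c2)))"
      using Suc.IH[OF jM] .
    have h1: "Ex a m (Suc j) (\<lambda>y. \<Psi> (z + c1) (y + c1)) / 2 \<le> Ex a (Suc m) j (\<lambda>y. \<Psi> (z + a j + c) (y + c))" for z
    proof -
      have e: "(\<lambda>y. \<Psi> (z + c1) (y + c1)) = (\<lambda>y. \<Psi> (z + a j + c) (y + a j + c))"
        unfolding c1_def by (simp add: ac_simps)
      have "0 \<le> Ex a m (Suc j) (\<lambda>y. \<Psi> (z + a j + c) (y - a j + c))"
        by (rule Ex_nonneg) (rule Psi0)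
      then show ?thesis unfolding e by simp
    qed
    have h2: "Ex a m (Suc j) (\<lambda>y. \<Psi> (z + c2) (y + c2)) / 2 \<le> Ex a (Suc m) j (\<lambda>y. \<Psi> (z - a j + c) (y + c))" for z
    proof -
      have e: "(\<lambda>y. \<Psi> (z + c2) (y + c2)) = (\<lambda>y. \<Psi> (z - a j + c) (y - a j + c))"
        unfolding c2_def by (simp add: algebra_simps)
      have "0 \<le> Ex a m (Suc j) (\<lambda>y. \<Psi> (z - a j + c) (y + a j + c))"
        by (rule Ex_nonneg) (rule Psi0)
      then show ?thesis unfolding e by simp
    qed
    have eL: "Ex a (Suc m) j (\<lambda>x. \<psi> (x + c)) = (Ex a m (Suc j) (\<lambda>x. \<psi> (x + c1)) + Ex a m (Suc j) (\<lambda>x. \<psi> (x + c2))) / 2"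
      unfolding c1_def c2_def by (simp add: algebra_simps)
    have "Ex a (Suc m) j (\<lambda>x. Ex a (Suc m) j (\<lambda>y. \<Psi> (x + c) (y + c)))
       = (Ex a m (Suc j) (\<lambda>z. Ex a (Suc m) j (\<lambda>y. \<Psi> (z + a j + c) (y + c)))
          + Ex a m (Suc j) (\<lambda>z. Ex a (Suc m) j (\<lambda>y. \<Psi> (z - a j + c) (y + c)))) / 2"
      by (simp only: Ex.simps(2))
    also have "\<dots> \<ge> (Ex a m (Suc j) (\<lambda>z. Ex a m (Suc j) (\<lambda>y. \<Psi> (z + c1) (y + c1)) / 2)
          + Ex a m (Suc j) (\<lambda>z. Ex a m (Suc j) (\<lambda>y. \<Psi> (z + c2) (y + c2)) / 2)) / 2"
      by (intro divide_right_mono add_mono Ex_mono h1 h2) simp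
    finally have "(Ex a m (Suc j) (\<lambda>z. Ex a m (Suc j) (\<lambda>y. \<Psi> (z + c1) (y + c1)))
          + Ex a m (Suc j) (\<lambda>z. Ex a m (Suc j) (\<lambda>y. \<Psi> (z + c2) (y + c2)))) / 4
        \<le> Ex a (Suc m) j (\<lambda>x. Ex a (Suc m) j (\<lambda>y. \<Psi> (x + c) (y + c)))"
      by (simp add: Ex_divide)
    moreover have "Ex a (Suc m) j (\<lambda>x. \<psi> (x + c)) / 2^(M - j) \<le>
       (Ex a m (Suc j) (\<lambda>z. Ex a m (Suc j) (\<lambda>y. \<Psi> (z + c1) (y + c1)))
          + Ex a m (Suc j) (\<lambda>z. Ex a m (Suc j) (\<lambda>y. \<Psi> (z + c2) (y + c2)))) / 4"
      using add_mono[OF IH1 IH2] unfolding eL pw by (simp add: field_simps)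
    ultimately show ?thesis by linarith
  qed
qed



definition FT :: "real \<Rightarrow> real \<Rightarrow> real" where
  "FT T u = (if u = 0 then T^2/2 else (1 - cos (T * u)) / u^2)"

lemma one_minus_cos_eq: "1 - cos (v::real) = 2 * sin (v/2)^2"
  using cos_double_sin[of "v/2"] by simp

lemma one_minus_cos_le: "1 - cos (v::real) \<le> v^2 / 2"
proof -
  have "sin (v/2)^2 \<le> (v/2)^2"
    using abs_sin_x_le_abs_x[of "v/2"] by (metis power2_abs power_mono abs_ge_zero)
  then show ?thesis unfolding one_minus_cos_eq by (simp add: power_divide)
qed

lemma sin_lower: assumes "0 \<le> (w::real)" "w \<le> 1" shows "5/6 * w \<le> sin w"
proof -
  have "\<bar>sin w - (\<Sum>m<3. sin_coeff m * w ^ m)\<bar> \<le> inverse (fact 3) * \<bar>w\<bar> ^ 3"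
    by (rule Maclaurin_sin_bound)
  moreover have "(\<Sum>m<3. sin_coeff m * w ^ m) = w"
    by (simp add: sin_coeff_def numeral_3_eq_3 lessThan_Suc)
  moreover have "w ^ 3 \<le> w"
  proof -
    have "w * w \<le> 1" using assms by (simp add: mult_le_one)
    then have "w * (w * w) \<le> w * 1" using assms by (intro mult_left_mono) auto
    then show ?thesis by (simp add: power3_eq_cube mult.assoc)
  qed
  ultimately have "\<bar>sin w - w\<bar> * 6 \<le> w" using assms(1) by (simp add: fact_numeral)
  then show ?thesis by (cases "sin w \<ge> w") (auto simp: abs_if)
qed

lemma one_minus_cos_ge: assumes "\<bar>v\<bar> \<le> 2" shows "(v::real)^2 / 3 \<le> 1 - cos v"
proof -
  define w where "w = \<bar>v\<bar> / 2"
  have w: "0 \<le> w" "w \<le> 1" using assms by (auto simp: w_def)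
  have "sin (v/2)^2 = sin w ^ 2"
    unfolding w_def by (cases "v \<ge> 0") (auto simp: power2_eq_square)
  moreover have "(5/6 * w)^2 \<le> sin w ^ 2"
    using sin_lower[OF w] w by (intro power_mono) auto
  moreover have "v^2 = 4 * w^2" unfolding w_def by (simp add: power2_eq_square)
  ultimately have A: "sin (v/2)^2 = sin w ^ 2" "25 * (w * w) \<le> 36 * (sin w * sin w)" "v^2 = 4 * (w * w)"
    by (auto simp: power2_eq_square)
  have B: "0 \<le> w * w" by simp
  have "2 * (w * w) \<le> 3 * (sin w * sin w)" using A(2) B by linarith
  then show ?thesis unfolding one_minus_cos_eq A(1) A(3) by (simp add: power2_eq_square)
qed

lemma FT_nonneg: "0 \<le> FT T u"
  by (simp add: FT_def)

lemma FT_le: "FT T u \<le> T^2 / 2"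
proof (cases "u = 0")
  case False
  have "1 - cos (T * u) \<le> (T * u)^2 / 2" by (rule one_minus_cos_le)
  then show ?thesis using False by (simp add: FT_def divide_le_eq power_mult_distrib)
qed (simp add: FT_def)

lemma FT_le_inv: assumes "u \<noteq> 0" shows "FT T u \<le> 2 / u^2"
proof -
  have "1 - cos (T * u) \<le> 2" by (smt (verit) cos_ge_minus_one)
  then show ?thesis using assms by (simp add: FT_def divide_right_mono)
qed

lemma FT_sq_le: "u^2 * FT T u \<le> 2"
proof (cases "u = 0")
  case False
  have "1 - cos (T * u) \<le> 2" by (smt (verit) cos_ge_minus_one)
  then show ?thesis using False by (simp add: FT_def)
qed (simp add: FT_def)

lemma FT_even: "FT T (- u) = FT T u"
  by (simp add: FT_def)

lemma FT_ge: assumes "\<bar>T * u\<bar> \<le> 2" shows "T^2 / 3 \<le> FT T u"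
proof (cases "u = 0")
  case False
  have "(T * u)^2 / 3 \<le> 1 - cos (T * u)" by (rule one_minus_cos_ge[OF assms])
  then show ?thesis using False by (simp add: FT_def le_divide_eq power_mult_distrib)
qed (simp add: FT_def)

lemma FT_integral:
  assumes "0 \<le> T"
  shows "((\<lambda>t. (T - t) * cos (u * t)) has_integral FT T u) {0..T}"
proof (cases "u = 0")
  case True
  have "((\<lambda>t. (T - t)) has_integral ((\<lambda>t. T * t - t^2/2) T - (\<lambda>t. T * t - t^2/2) 0)) {0..T}"
    apply (rule fundamental_theorem_of_calculus[OF assms])
    unfolding has_real_derivative_iff_has_vector_derivative[symmetric]
    by (auto intro!: derivative_eq_intros)
  then show ?thesis using True by (simp add: FT_def power2_eq_square)
next
  case False
  define G where "G t = (T - t) * sin (u * t) / u - cos (u * t) / u^2" for t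
  have d: "(G has_real_derivative (T - t) * cos (u * t)) (at t)" for t
    unfolding G_def using False
    by (auto intro!: derivative_eq_intros simp: field_simps power2_eq_square)
  have "((\<lambda>t. (T - t) * cos (u * t)) has_integral (G T - G 0)) {0..T}"
    apply (rule fundamental_theorem_of_calculus[OF assms])
    unfolding has_real_derivative_iff_has_vector_derivative[symmetric]
    using d by (blast intro: has_field_derivative_at_within)
  moreover have "G T - G 0 = FT T u"
    using False by (simp add: G_def FT_def field_simps)
  ultimately show ?thesis by simp
qed



locale sq =
  fixes a :: "nat \<Rightarrow> real"
  assumes apos: "\<And>n. 0 < a n" and asum: "summable a"
    and adom0: "\<And>n. (\<Sum>i. a (i + Suc n)) < a n"
begin

definition rho where "rho n = (\<Sum>i. a (i + n))"

lemma summ_shift: "summable (\<lambda>i. a (i + n))"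
  using asum by simp

lemma rho_split: "rho n = a n + rho (Suc n)"
proof -
  have "(\<Sum>i. a (Suc i + n)) = (\<Sum>i. a (i + n)) - a (0 + n)"
    by (rule suminf_split_head[OF summ_shift])
  then show ?thesis unfolding rho_def by simp
qed

lemma rho_pos: "0 < rho n"
  unfolding rho_def by (rule suminf_pos[OF summ_shift apos])

lemma adom: "rho (Suc n) < a n"
  using adom0[of n] by (simp add: rho_def)

lemma rho_half: "2 * rho (Suc n) < rho n"
  using adom[of n] rho_split[of n] by simp

lemma rho_shift: "rho (n + d) * 2^d \<le> rho n"
proof (induction d)
  case 0
  then show ?case by simp
next
  case (Suc d)
  have "rho (n + Suc d) * 2 ^ Suc d = (2 * rho (Suc (n + d))) * 2^d" by simp
  also have "\<dots> \<le> rho (n + d) * 2^d"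
    using rho_half[of "n + d"] by (intro mult_right_mono) auto
  also have "\<dots> \<le> rho n" by (rule Suc.IH)
  finally show ?case .
qed

lemma sum_rho: "(\<Sum>i\<in>{n..<n+m}. a i) + rho (n + m) = rho n"
proof (induction m)
  case 0
  then show ?case by simp
next
  case (Suc m)
  then show ?case using rho_split[of "n + m"] by simp
qed

lemma sum_le_rho: "(\<Sum>i\<in>{n..<n+m}. a i) \<le> rho n"
  using sum_rho[of n m] rho_pos[of "n + m"] by simp

lemma a_nonneg: "0 \<le> a i"
  using apos[of i] by simp

lemma rho_anti: "m \<le> n \<Longrightarrow> rho n \<le> rho m"
  using sum_rho[of m "n - m"] sum_nonneg[of "{m..<m+(n-m)}" a] a_nonneg by simp

context
  fixes T :: real and M :: nat
  assumes Tpos: "0 < T" and M1: "1 \<le> M" and TM: "1 / T \<le> rho (M - 1)"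
begin

lemma L1:
  assumes u: "2 * rho (Suc j) \<le> \<bar>u\<bar>"
  shows "FT T u \<le> 5 * T^2 * 3^j / 3^M"
proof (cases "j + 2 \<le> M")
  case True
  then obtain d where d: "M = j + 2 + d" using le_Suc_ex by blast
  define R where "R = rho (Suc j)"
  have R0: "0 < R" using rho_pos by (simp add: R_def)
  have "rho (Suc j + d) * 2^d \<le> R" unfolding R_def by (rule rho_shift)
  moreover have "M - 1 = Suc j + d" using d by simp
  ultimately have "1 / T * 2^d \<le> R" using TM
    by (metis (no_types, opaque_lifting) dual_order.trans mult_right_mono zero_le_numeral zero_le_power)
  hence TR: "2^d \<le> T * R" using Tpos by (simp add: field_simps)
  have u0: "u \<noteq> 0" using u R0 R_def by auto
  have "FT T u \<le> 2 / u^2" by (rule FT_le_inv[OF u0])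
  also have "\<dots> \<le> 2 / (2 * R)^2"
  proof -
    have "(2 * R)^2 \<le> \<bar>u\<bar>^2" using u R0 unfolding R_def by (intro power_mono) auto
    then show ?thesis using R0 u0 by (intro divide_left_mono) auto
  qed
  also have "\<dots> = 1 / (2 * R^2)" by (simp add: power2_eq_square)
  also have "\<dots> \<le> T^2 / (2 * 4^d)"
  proof -
    have "(2^d)^2 \<le> (T * R)^2" using TR by (intro power_mono) auto
    moreover have "((2::real)^d)^2 = 4^d" by (simp add: power2_eq_square power_mult_distrib[symmetric])
    ultimately have "4^d \<le> T^2 * R^2" by (simp add: power_mult_distrib)
    then show ?thesis using R0 Tpos by (simp add: field_simps)
  qed
  also have "\<dots> \<le> 5 * T^2 * 3^j / 3^M"
  proof -
    have "(3::real)^d \<le> 4^d" by (intro power_mono) auto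
    moreover have "0 \<le> (3::real)^d" by simp
    ultimately have "9 * (3::real)^d \<le> 10 * 4^d" by linarith
    then have "T^2 * (9 * 3^d) \<le> T^2 * (10 * 4^d)" by (intro mult_left_mono) auto
    then show ?thesis unfolding d using Tpos by (simp add: field_simps power_add)
  qed
  finally show ?thesis .
next
  case False
  then have "(3::real)^M \<le> 3^(Suc j)" by (intro power_increasing) auto
  moreover have "0 \<le> (3::real)^j" by simp
  ultimately have "(3::real)^M \<le> 10 * 3^j" by (simp only: power_Suc)
  then have "T^2 / 2 \<le> 5 * T^2 * 3^j / 3^M" using Tpos by (simp add: field_simps)
  then show ?thesis using FT_le[of T u] by linarith
qed

lemma clB: "2 * rho j < \<bar>b\<bar> \<Longrightarrow> Ez a m j (\<lambda>z. FT T (b + z)) \<le> 15 * T^2 * 3^j / 3^M"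
proof (induction m arbitrary: j b)
  case 0
  have "2 * rho (Suc j) \<le> \<bar>b\<bar>" using 0 rho_split[of j] apos[of j] rho_pos[of "Suc j"] by simp
  then have "FT T b \<le> 5 * T^2 * 3^j / 3^M" by (rule L1)
  moreover have "0 \<le> T^2 * 3^j / 3^M" by simp
  moreover have "5 * T^2 * 3^j / 3^M = 5 * (T^2 * 3^j / 3^M)" "15 * T^2 * 3^j / 3^M = 15 * (T^2 * 3^j / 3^M)"
    by simp_all
  ultimately show ?case by (simp only: Ez.simps add_0_right)
next
  case (Suc m)
  define K where "K = 5 * T^2 * 3^j / 3^M"
  have supp: "\<bar>z\<bar> \<le> 2 * rho (Suc j)" if "\<bar>z\<bar> \<le> 2 * (\<Sum>i\<in>{Suc j..<Suc j+m}. a i)" for z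
    using that sum_le_rho[of "Suc j" m] by simp
  have rs: "rho j = a j + rho (Suc j)" by (rule rho_split)
  have ad: "rho (Suc j) < a j" by (rule adom)
  have bnd: "Ez a m (Suc j) (\<lambda>z. FT T (f z)) \<le> K"
    if "\<And>z. \<bar>z\<bar> \<le> 2 * rho (Suc j) \<Longrightarrow> 2 * rho (Suc j) \<le> \<bar>f z\<bar>" for f
  proof -
    have "Ez a m (Suc j) (\<lambda>z. FT T (f z)) \<le> Ez a m (Suc j) (\<lambda>z. K)"
      apply (rule Ez_mono_supp[OF a_nonneg])
      unfolding K_def by (rule L1, rule that, rule supp)
    then show ?thesis by (simp add: Ez_const)
  qed
  have K9: "15 * T^2 * 3^(Suc j) / 3^M = 9 * K" unfolding K_def by simp
  show ?case
  proof (cases "b > 0")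
    case True
    have t1: "Ez a m (Suc j) (\<lambda>z. FT T (b + (z + 2 * a j))) \<le> K"
      by (rule bnd) (use True Suc.prems rs ad in auto)
    have t2: "Ez a m (Suc j) (\<lambda>z. FT T (b + z)) \<le> K"
      by (rule bnd) (use True Suc.prems rs ad in auto)
    have t3: "Ez a m (Suc j) (\<lambda>z. FT T ((b - 2 * a j) + z)) \<le> 9 * K"
      unfolding K9[symmetric] by (rule Suc.IH) (use True Suc.prems rs ad in auto)
    have e3: "(\<lambda>z. FT T (b + (z - 2 * a j))) = (\<lambda>z. FT T ((b - 2 * a j) + z))"
      by (simp add: algebra_simps)
    show ?thesis using t1 t2 t3 unfolding Ez.simps e3 K_def by simp
  next
    case False
    then have bneg: "b < 0" using Suc.prems rho_pos[of j] by auto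
    have t1: "Ez a m (Suc j) (\<lambda>z. FT T (b + (z - 2 * a j))) \<le> K"
      by (rule bnd) (use bneg Suc.prems rs ad in auto)
    have t2: "Ez a m (Suc j) (\<lambda>z. FT T (b + z)) \<le> K"
      by (rule bnd) (use bneg Suc.prems rs ad in auto)
    have t3: "Ez a m (Suc j) (\<lambda>z. FT T ((b + 2 * a j) + z)) \<le> 9 * K"
      unfolding K9[symmetric] by (rule Suc.IH) (use bneg Suc.prems rs ad in auto)
    have e3: "(\<lambda>z. FT T (b + (z + 2 * a j))) = (\<lambda>z. FT T ((b + 2 * a j) + z))"
      by (simp add: algebra_simps)
    show ?thesis using t1 t2 t3 unfolding Ez.simps e3 K_def by simp
  qed
qed

lemma clC: "j \<le> M \<Longrightarrow> M \<le> j + m \<Longrightarrow> Ez a m j (FT T) \<le> 46 * T^2 * 2^j / 2^M - 45 * T^2 * 3^j / 3^M"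
proof (induction m arbitrary: j)
  case 0
  then have "j = M" by simp
  then show ?case by (simp add: FT_def)
next
  case (Suc m)
  show ?case
  proof (cases "j = M")
    case True
    have "Ez a (Suc m) j (FT T) \<le> Ez a (Suc m) j (\<lambda>z. T^2/2)"
      by (rule Ez_mono) (rule FT_le)
    then have X: "Ez a (Suc m) j (FT T) \<le> T^2/2" by (simp only: Ez_const)
    have e: "46 * T^2 * 2^j / 2^M - 45 * T^2 * 3^j / 3^M = T^2" using True by simp
    have "0 \<le> T^2" by simp
    then show ?thesis using X e by linarith
  next
    case False
    then have jM: "Suc j \<le> M" "M \<le> Suc j + m" using Suc.prems by auto
    have ad: "2 * rho (Suc j) < \<bar>2 * a j\<bar>" "2 * rho (Suc j) < \<bar>- (2 * a j)\<bar>"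
      using adom[of j] apos[of j] by auto
    have t1: "Ez a m (Suc j) (\<lambda>z. FT T (z + 2 * a j)) \<le> 15 * T^2 * 3^(Suc j) / 3^M"
      using clB[OF ad(1), of m] by (simp add: add.commute)
    have t3: "Ez a m (Suc j) (\<lambda>z. FT T (z - 2 * a j)) \<le> 15 * T^2 * 3^(Suc j) / 3^M"
      using clB[OF ad(2), of m] by (simp add: add.commute)
    have t2: "Ez a m (Suc j) (FT T) \<le> 46 * T^2 * 2^(Suc j) / 2^M - 45 * T^2 * 3^(Suc j) / 3^M"
      by (rule Suc.IH[OF jM])
    have "Ez a (Suc m) j (FT T) \<le> (2 * (15 * T^2 * 3^(Suc j) / 3^M)
        + 2 * (46 * T^2 * 2^(Suc j) / 2^M - 45 * T^2 * 3^(Suc j) / 3^M)) / 4"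
      using t1 t2 t3 by simp
    also have "\<dots> = 46 * T^2 * 2^j / 2^M - 45 * T^2 * 3^j / 3^M"
      by (simp add: field_simps)
    finally show ?thesis .
  qed
qed

end
end


lemma cauchy_lim:
  fixes q :: "nat \<Rightarrow> real"
  assumes d: "\<And>n. \<bar>q (Suc n) - q n\<bar> \<le> D * e n" and s: "summable e" and e0: "\<And>n. 0 \<le> e n"
  shows "q \<longlonglongrightarrow> lim q" "\<bar>lim q - q N\<bar> \<le> D * (\<Sum>i. e (i + N))"
proof -
  define dd where "dd i = q (Suc i) - q i" for i
  have sD: "summable (\<lambda>i. D * e i)" using s by (rule summable_mult)
  have sa: "summable (\<lambda>i. \<bar>dd i\<bar>)"
    by (rule summable_comparison_test'[OF sD]) (simp add: dd_def d)
  have sd: "summable dd" using sa by (rule summable_rabs_cancel)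
  have qn: "q n = q 0 + (\<Sum>i<n. dd i)" for n
    unfolding dd_def by (simp add: sum_lessThan_telescope)
  have "(\<lambda>n. q 0 + (\<Sum>i<n. dd i)) \<longlonglongrightarrow> q 0 + suminf dd"
    by (intro tendsto_add tendsto_const summable_LIMSEQ[OF sd])
  then have L: "q \<longlonglongrightarrow> q 0 + suminf dd" unfolding qn[symmetric] by simp
  then have lq: "lim q = q 0 + suminf dd" by (rule limI)
  then show "q \<longlonglongrightarrow> lim q" using L by simp
  have "lim q - q N = (\<Sum>i. dd (i + N))"
    unfolding lq qn[of N] using suminf_split_initial_segment[OF sd, of N] by simp
  also have "\<bar>\<dots>\<bar> \<le> (\<Sum>i. \<bar>dd (i + N)\<bar>)"
    by (rule summable_rabs) (use summable_iff_shift[of "\<lambda>i. \<bar>dd i\<bar>" N] sa in simp)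
  also have "\<dots> \<le> (\<Sum>i. D * e (i + N))"
    apply (rule suminf_le)
    using summable_iff_shift[of "\<lambda>i. \<bar>dd i\<bar>" N] summable_iff_shift[of "\<lambda>i. D * e i" N] sa sD d
    by (auto simp: dd_def)
  also have "\<dots> = D * (\<Sum>i. e (i + N))"
    by (rule suminf_mult) (use s in simp)
  finally show "\<bar>lim q - q N\<bar> \<le> D * (\<Sum>i. e (i + N))" .
qed

lemma deriv_limit:
  fixes f f' :: "nat \<Rightarrow> real \<Rightarrow> real"
  assumes der: "\<And>n t. (f n has_real_derivative f' n t) (at t)"
    and lim: "\<And>t. (\<lambda>n. f n t) \<longlonglongrightarrow> F t"
    and unif: "\<And>K. \<exists>D. \<forall>n t. \<bar>t\<bar> < K \<longrightarrow> \<bar>f' n t - G t\<bar> \<le> D * e n"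
    and e: "e \<longlonglongrightarrow> 0"
  shows "(F has_real_derivative G t) (at t)"
proof -
  define S where "S = ball (0::real) (\<bar>t\<bar> + 1)"
  have oS: "open S" "convex S" "t \<in> S" by (auto simp: S_def)
  obtain D where D: "\<And>n x. \<bar>x\<bar> < \<bar>t\<bar> + 1 \<Longrightarrow> \<bar>f' n x - G x\<bar> \<le> D * e n"
    using unif[of "\<bar>t\<bar> + 1"] by blast
  have derf: "\<And>n x. x \<in> S \<Longrightarrow> (f n has_derivative (*) (f' n x)) (at x within S)"
    using der unfolding has_field_derivative_def by (blast intro: has_derivative_at_withinI)
  have nle: "\<forall>\<^sub>F n in sequentially. \<forall>x\<in>S. \<forall>h. norm (f' n x * h - G x * h) \<le> \<epsilon> * norm h"
    if "\<epsilon> > 0" for \<epsilon>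
  proof -
    have pos: "\<epsilon> / (\<bar>D\<bar> + 1) > 0" using that by simp
    have "\<forall>\<^sub>F n in sequentially. \<bar>e n\<bar> < \<epsilon> / (\<bar>D\<bar> + 1)"
      using order_tendstoD(2)[OF tendsto_rabs[OF e] ] pos by simp
    then show ?thesis
    proof (rule eventually_mono, intro ballI allI)
      fix n x h
      assume en: "\<bar>e n\<bar> < \<epsilon> / (\<bar>D\<bar> + 1)" and x: "x \<in> S"
      have "\<bar>x\<bar> < \<bar>t\<bar> + 1" using x by (simp add: S_def)
      then have "\<bar>f' n x - G x\<bar> \<le> D * e n" by (rule D)
      also have "\<dots> \<le> (\<bar>D\<bar> + 1) * \<bar>e n\<bar>"
      proof -
        have "D * e n \<le> \<bar>D * e n\<bar>" by simp
        also have "\<dots> = \<bar>D\<bar> * \<bar>e n\<bar>" by (simp add: abs_mult)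
        also have "\<dots> \<le> (\<bar>D\<bar> + 1) * \<bar>e n\<bar>" by (intro mult_right_mono) auto
        finally show ?thesis .
      qed
      also have "\<dots> \<le> \<epsilon>" using en by (simp add: field_simps)
      finally have "\<bar>f' n x - G x\<bar> \<le> \<epsilon>" .
      then have "\<bar>f' n x - G x\<bar> * \<bar>h\<bar> \<le> \<epsilon> * \<bar>h\<bar>" by (intro mult_right_mono) auto
      then show "norm (f' n x * h - G x * h) \<le> \<epsilon> * norm h"
        by (simp add: left_diff_distrib[symmetric] abs_mult)
    qed
  qed
  obtain g where g: "\<forall>x\<in>S. (\<lambda>n. f n x) \<longlonglongrightarrow> g x \<and> (g has_derivative (*) (G x)) (at x within S)"
    using has_derivative_sequence[OF oS(2) derf nle oS(3) lim[of t]] by blast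
  have gF: "g x = F x" if "x \<in> S" for x
    using g that lim[of x] LIMSEQ_unique by blast
  have "(g has_derivative (*) (G t)) (at t)"
    using g oS by (metis at_within_open)
  then have "(F has_derivative (*) (G t)) (at t)"
    by (rule has_derivative_transform_within_open[OF _ oS(1) oS(3)]) (rule gF)
  then show ?thesis unfolding has_field_derivative_def .
qed



context sq
begin

definition "A = rho 0"

lemma A_pos: "0 < A" unfolding A_def by (rule rho_pos)

lemma a_le_A: "a n \<le> A"
  using rho_split[of n] rho_pos[of "Suc n"] rho_anti[of 0 n] unfolding A_def by simp

lemma Ex_abs_le:
  assumes "\<And>x. \<bar>x\<bar> \<le> A \<Longrightarrow> \<bar>h x\<bar> \<le> B"
  shows "\<bar>Ex a N 0 h\<bar> \<le> B"
proof -
  have s: "\<bar>x\<bar> \<le> A" if "\<bar>x\<bar> \<le> (\<Sum>i\<in>{0..<0+N}. a i)" for x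
    using that sum_le_rho[of 0 N] unfolding A_def by simp
  have "Ex a N 0 h \<le> Ex a N 0 (\<lambda>x. B)"
    by (rule Ex_mono_supp[OF a_nonneg]) (use assms s in \<open>auto simp: abs_le_iff\<close>)
  moreover have "Ex a N 0 (\<lambda>x. - B) \<le> Ex a N 0 h"
    by (rule Ex_mono_supp[OF a_nonneg]) (use assms s in \<open>force simp: abs_le_iff\<close>)
  ultimately show ?thesis by (simp add: Ex_const)
qed

definition "p N t = Ex a N 0 (\<lambda>x. cos (t * x))"
definition "p1 N t = Ex a N 0 (\<lambda>x. - x * sin (t * x))"
definition "p2 N t = Ex a N 0 (\<lambda>x. - (x^2) * cos (t * x))"

lemma p_prod: "p N t = (\<Prod>i<N. cos (a i * t))"
  using Ex_cos[of a N 0 t 0] unfolding p_def by (simp add: atLeast0LessThan)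

lemma dp: "(p N has_real_derivative p1 N t) (at t)"
proof -
  have "((\<lambda>t. Ex a N 0 (\<lambda>x. cos (t * x))) has_real_derivative Ex a N 0 (\<lambda>x. - x * sin (t * x))) (at t)"
    by (rule Ex_deriv) (auto intro!: derivative_eq_intros)
  then show ?thesis unfolding p_def p1_def .
qed

lemma dp1: "(p1 N has_real_derivative p2 N t) (at t)"
proof -
  have "((\<lambda>t. Ex a N 0 (\<lambda>x. - x * sin (t * x))) has_real_derivative Ex a N 0 (\<lambda>x. - (x^2) * cos (t * x))) (at t)"
    by (rule Ex_deriv) (auto intro!: derivative_eq_intros simp: power2_eq_square)
  then show ?thesis unfolding p1_def p2_def .
qed

lemma p_bnd: "\<bar>p N t\<bar> \<le> 1"
  unfolding p_def by (rule Ex_abs_le) simp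

lemma p1_bnd: "\<bar>p1 N t\<bar> \<le> A"
  unfolding p1_def
proof (rule Ex_abs_le)
  fix x :: real assume x: "\<bar>x\<bar> \<le> A"
  have "\<bar>- x * sin (t * x)\<bar> = \<bar>x\<bar> * \<bar>sin (t * x)\<bar>" by (simp add: abs_mult)
  also have "\<dots> \<le> \<bar>x\<bar> * 1" by (intro mult_left_mono) auto
  finally show "\<bar>- x * sin (t * x)\<bar> \<le> A" using x by simp
qed

lemma p2_bnd: "\<bar>p2 N t\<bar> \<le> A^2"
  unfolding p2_def
proof (rule Ex_abs_le)
  fix x :: real assume x: "\<bar>x\<bar> \<le> A"
  have "\<bar>- (x^2) * cos (t * x)\<bar> = x^2 * \<bar>cos (t * x)\<bar>" by (simp add: abs_mult)
  also have "\<dots> \<le> x^2 * 1" by (intro mult_left_mono) auto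
  also have "\<dots> \<le> A^2" using x by simp (metis abs_ge_zero power2_abs power_mono)
  finally show "\<bar>- (x^2) * cos (t * x)\<bar> \<le> A^2" .
qed

lemma p_Suc: "p (Suc N) t = p N t * cos (a N * t)"
  by (simp add: p_prod)

lemma p1_Suc: "p1 (Suc N) t = p1 N t * cos (a N * t) - p N t * (a N * sin (a N * t))"
proof -
  have e: "p (Suc N) = (\<lambda>t. p N t * cos (a N * t))" by (rule ext) (rule p_Suc)
  have dc: "((\<lambda>t. cos (a N * t)) has_real_derivative - sin (a N * t) * a N) (at t)"
    by (auto intro!: derivative_eq_intros)
  have "((\<lambda>t. p N t * cos (a N * t)) has_real_derivative p1 N t * cos (a N * t) + - sin (a N * t) * a N * p N t) (at t)"
    by (rule DERIV_mult[OF dp dc])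
  then have "((\<lambda>t. p N t * cos (a N * t)) has_real_derivative p1 N t * cos (a N * t) - p N t * (a N * sin (a N * t))) (at t)"
    by (simp add: algebra_simps)
  then show ?thesis using dp[of "Suc N" t] unfolding e by (rule DERIV_unique[rotated])
qed

lemma p2_Suc: "p2 (Suc N) t = p2 N t * cos (a N * t) - p1 N t * (a N * sin (a N * t))
   - (p1 N t * (a N * sin (a N * t)) + p N t * (a N * (a N * cos (a N * t))))"
proof -
  have e: "p1 (Suc N) = (\<lambda>t. p1 N t * cos (a N * t) - p N t * (a N * sin (a N * t)))" by (rule ext) (rule p1_Suc)
  have "((\<lambda>t. p1 N t * cos (a N * t) - p N t * (a N * sin (a N * t))) has_real_derivative
     p2 N t * cos (a N * t) - p1 N t * (a N * sin (a N * t))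
   - (p1 N t * (a N * sin (a N * t)) + p N t * (a N * (a N * cos (a N * t))))) (at t)"
  proof -
    have dc: "((\<lambda>t. cos (a N * t)) has_real_derivative - sin (a N * t) * a N) (at t)"
      by (auto intro!: derivative_eq_intros)
    have ds: "((\<lambda>t. a N * sin (a N * t)) has_real_derivative a N * (cos (a N * t) * a N)) (at t)"
      by (auto intro!: derivative_eq_intros)
    have "((\<lambda>t. p1 N t * cos (a N * t) - p N t * (a N * sin (a N * t))) has_real_derivative
       (p2 N t * cos (a N * t) + - sin (a N * t) * a N * p1 N t) - (p1 N t * (a N * sin (a N * t)) + a N * (cos (a N * t) * a N) * p N t)) (at t)"
      by (rule DERIV_diff[OF DERIV_mult[OF dp1 dc] DERIV_mult[OF dp ds]])
    then show ?thesis by (simp add: algebra_simps)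
  qed
  then show ?thesis using dp1[of "Suc N" t] unfolding e by (rule DERIV_unique[rotated])
qed

lemma cos_m1: "\<bar>cos v - 1\<bar> \<le> (v::real)^2 / 2"
  using one_minus_cos_le[of v] cos_le_one[of v] by simp

lemma diff1: "\<bar>p1 (Suc N) t - p1 N t\<bar> \<le> (A^2 * t^2 / 2 + A * \<bar>t\<bar>) * a N"
proof -
  have aN: "0 \<le> a N" "a N \<le> A" using a_nonneg a_le_A by auto
  have "\<bar>p1 (Suc N) t - p1 N t\<bar> = \<bar>p1 N t * (cos (a N * t) - 1) - p N t * (a N * sin (a N * t))\<bar>"
    by (simp add: p1_Suc algebra_simps)
  also have "\<dots> \<le> \<bar>p1 N t\<bar> * \<bar>cos (a N * t) - 1\<bar> + \<bar>p N t\<bar> * (a N * \<bar>sin (a N * t)\<bar>)"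
  proof -
    have t: "\<bar>x - y\<bar> \<le> \<bar>x\<bar> + \<bar>(y::real)\<bar>" for x y by arith
    show ?thesis using t[of "p1 N t * (cos (a N * t) - 1)" "p N t * (a N * sin (a N * t))"]
      aN by (simp add: abs_mult)
  qed
  also have "\<dots> \<le> A * ((a N * t)^2 / 2) + 1 * (a N * (a N * \<bar>t\<bar>))"
  proof (intro add_mono mult_mono)
    show "\<bar>sin (a N * t)\<bar> \<le> a N * \<bar>t\<bar>" using abs_sin_x_le_abs_x[of "a N * t"] aN by (simp add: abs_mult)
  qed (use p1_bnd p_bnd cos_m1 aN in auto)
  also have "\<dots> \<le> (A^2 * t^2 / 2 + A * \<bar>t\<bar>) * a N"
  proof -
    have "a N * a N \<le> A * a N" using aN by (intro mult_right_mono) auto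
    then have 1: "a N * a N * t^2 \<le> A * a N * t^2" by (rule mult_right_mono) auto
    have 2: "a N * a N * \<bar>t\<bar> \<le> A * a N * \<bar>t\<bar>" using \<open>a N * a N \<le> A * a N\<close> by (rule mult_right_mono) auto
    have "A * (a N * a N * t^2) \<le> A * (A * a N * t^2)" using 1 A_pos by (intro mult_left_mono) auto
    then show ?thesis using 2 by (simp add: power2_eq_square algebra_simps)
  qed
  finally show ?thesis .
qed

lemma diff2: "\<bar>p2 (Suc N) t - p2 N t\<bar> \<le> (A^3 * t^2 / 2 + 2 * A^2 * \<bar>t\<bar> + A) * a N"
proof -
  have aN: "0 \<le> a N" "a N \<le> A" using a_nonneg a_le_A by auto
  have "\<bar>p2 (Suc N) t - p2 N t\<bar> = \<bar>p2 N t * (cos (a N * t) - 1) - 2 * (p1 N t * (a N * sin (a N * t)))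
       - p N t * (a N * (a N * cos (a N * t)))\<bar>"
    by (simp add: p2_Suc algebra_simps)
  also have "\<dots> \<le> \<bar>p2 N t\<bar> * \<bar>cos (a N * t) - 1\<bar> + 2 * (\<bar>p1 N t\<bar> * (a N * \<bar>sin (a N * t)\<bar>))
       + \<bar>p N t\<bar> * (a N * (a N * \<bar>cos (a N * t)\<bar>))"
  proof -
    have t: "\<bar>x - y - z\<bar> \<le> \<bar>x\<bar> + \<bar>y\<bar> + \<bar>(z::real)\<bar>" for x y z by arith
    show ?thesis using t[of "p2 N t * (cos (a N * t) - 1)" "2 * (p1 N t * (a N * sin (a N * t)))" "p N t * (a N * (a N * cos (a N * t)))"]
      aN by (simp add: abs_mult)
  qed
  also have "\<dots> \<le> A^2 * ((a N * t)^2 / 2) + 2 * (A * (a N * (a N * \<bar>t\<bar>))) + 1 * (a N * (a N * 1))"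
  proof (intro add_mono mult_mono mult_left_mono)
    show "\<bar>sin (a N * t)\<bar> \<le> a N * \<bar>t\<bar>" using abs_sin_x_le_abs_x[of "a N * t"] aN by (simp add: abs_mult)
  qed (use p2_bnd p1_bnd p_bnd cos_m1 aN A_pos in auto)
  also have "\<dots> \<le> (A^3 * t^2 / 2 + 2 * A^2 * \<bar>t\<bar> + A) * a N"
  proof -
    have q: "a N * a N \<le> A * a N" using aN by (intro mult_right_mono) auto
    have 1: "A^2 * (a N * a N * t^2) \<le> A^2 * (A * a N * t^2)"
      using q aN by (intro mult_left_mono mult_right_mono) auto
    have 2: "A * (a N * a N * \<bar>t\<bar>) \<le> A * (A * a N * \<bar>t\<bar>)"
      using q A_pos aN by (intro mult_left_mono mult_right_mono) auto
    show ?thesis using 1 2 q by (simp add: power2_eq_square power3_eq_cube algebra_simps)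
  qed
  finally show ?thesis .
qed

end


context sq
begin

definition "r t = (\<Prod>n. cos (a n * t))"
definition "R1 t = lim (\<lambda>N. p1 N t)"
definition "R2 t = lim (\<lambda>N. p2 N t)"

lemma rho_tendsto: "rho \<longlonglongrightarrow> 0"
proof (rule tendsto_sandwich[of "\<lambda>n. 0" _ _ "\<lambda>n. rho 0 * (1/2)^n"])
  show "\<forall>\<^sub>F n in sequentially. 0 \<le> rho n" using rho_pos by (simp add: less_imp_le)
  show "\<forall>\<^sub>F n in sequentially. rho n \<le> rho 0 * (1/2)^n"
  proof (rule always_eventually, rule allI)
    fix n
    have "rho (0 + n) * 2^n \<le> rho 0" by (rule rho_shift)
    then show "rho n \<le> rho 0 * (1/2)^n" by (simp add: field_simps power_divide)
  qed
  show "(\<lambda>n. rho 0 * (1/2)^n) \<longlonglongrightarrow> 0"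
    by (rule tendsto_mult_right_zero) (rule LIMSEQ_power_zero, simp)
qed simp

lemma summ_sq: "summable (\<lambda>i. a i ^ 2)"
proof (rule summable_comparison_test'[of "\<lambda>i. A * a i"])
  show "summable (\<lambda>i. A * a i)" using asum by (rule summable_mult)
  fix n
  have "a n * a n \<le> A * a n" using a_le_A a_nonneg by (intro mult_right_mono) auto
  then show "norm (a n ^ 2) \<le> A * a n" by (simp add: power2_eq_square)
qed

lemma p_lim: "(\<lambda>N. p N t) \<longlonglongrightarrow> r t"
proof -
  have s: "summable (\<lambda>i. norm (cos (a i * t) - 1))"
  proof (rule summable_comparison_test'[of "\<lambda>i. (A * t^2 / 2) * a i"])
    show "summable (\<lambda>i. (A * t^2 / 2) * a i)" using asum by (rule summable_mult)
    fix n
    have "norm (cos (a n * t) - 1) \<le> (a n * t)^2 / 2" using cos_m1 by simp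
    also have "\<dots> = (a n * a n) * t^2 / 2" by (simp add: power2_eq_square)
    also have "\<dots> \<le> (A * a n) * t^2 / 2"
      using a_le_A[of n] a_nonneg[of n] by (intro divide_right_mono mult_right_mono) auto
    finally show "norm (norm (cos (a n * t) - 1)) \<le> (A * t^2 / 2) * a n" by (simp add: mult_ac)
  qed
  have cp: "convergent_prod (\<lambda>i. cos (a i * t))"
    by (rule abs_convergent_prod_imp_convergent_prod[OF summable_imp_abs_convergent_prod[OF s]])
  have "(\<lambda>n. \<Prod>i\<le>n. cos (a i * t)) \<longlonglongrightarrow> r t"
    unfolding r_def by (rule convergent_prod_LIMSEQ[OF cp])
  then have "(\<lambda>n. \<Prod>i<n. cos (a i * t)) \<longlonglongrightarrow> r t"
    using LIMSEQ_lessThan_iff_atMost[of "\<lambda>S. \<Prod>i\<in>S. cos (a i * t)"] by simp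
  then show ?thesis by (simp add: p_prod)
qed

lemma p1_lim: "(\<lambda>N. p1 N t) \<longlonglongrightarrow> R1 t" and p1_err: "\<bar>R1 t - p1 N t\<bar> \<le> (A^2 * t^2 / 2 + A * \<bar>t\<bar>) * rho N"
proof -
  note c = cauchy_lim[of "\<lambda>N. p1 N t" "A^2 * t^2 / 2 + A * \<bar>t\<bar>" a, OF diff1 asum a_nonneg]
  show "(\<lambda>N. p1 N t) \<longlonglongrightarrow> R1 t" using c(1) unfolding R1_def .
  show "\<bar>R1 t - p1 N t\<bar> \<le> (A^2 * t^2 / 2 + A * \<bar>t\<bar>) * rho N" using c(2)[of N] unfolding R1_def rho_def .
qed

lemma p2_lim: "(\<lambda>N. p2 N t) \<longlonglongrightarrow> R2 t" and p2_err: "\<bar>R2 t - p2 N t\<bar> \<le> (A^3 * t^2 / 2 + 2 * A^2 * \<bar>t\<bar> + A) * rho N"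
proof -
  note c = cauchy_lim[of "\<lambda>N. p2 N t" "A^3 * t^2 / 2 + 2 * A^2 * \<bar>t\<bar> + A" a, OF diff2 asum a_nonneg]
  show "(\<lambda>N. p2 N t) \<longlonglongrightarrow> R2 t" using c(1) unfolding R2_def .
  show "\<bar>R2 t - p2 N t\<bar> \<le> (A^3 * t^2 / 2 + 2 * A^2 * \<bar>t\<bar> + A) * rho N" using c(2)[of N] unfolding R2_def rho_def .
qed

lemma dr: "(r has_real_derivative R1 t) (at t)"
proof (rule deriv_limit[of p p1, OF dp p_lim _ rho_tendsto])
  fix K :: real
  show "\<exists>D. \<forall>n t. \<bar>t\<bar> < K \<longrightarrow> \<bar>p1 n t - R1 t\<bar> \<le> D * rho n"
  proof (intro exI allI impI)
    fix n and t :: real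
    assume t: "\<bar>t\<bar> < K"
    have "t^2 \<le> K^2" using t by (metis abs_ge_zero abs_less_iff less_imp_le power2_abs power_mono order.trans abs_le_square_iff)
    then have "A^2 * t^2 / 2 + A * \<bar>t\<bar> \<le> A^2 * K^2 / 2 + A * K"
      using t A_pos by (intro add_mono divide_right_mono mult_left_mono) auto
    then have "(A^2 * t^2 / 2 + A * \<bar>t\<bar>) * rho n \<le> (A^2 * K^2 / 2 + A * K) * rho n"
      using rho_pos[of n] by (intro mult_right_mono) auto
    then show "\<bar>p1 n t - R1 t\<bar> \<le> (A^2 * K^2 / 2 + A * K) * rho n"
      using p1_err[of t n] by (simp add: abs_minus_commute)
  qed
qed

lemma dR1: "(R1 has_real_derivative R2 t) (at t)"
proof (rule deriv_limit[of p1 p2, OF dp1 p1_lim _ rho_tendsto])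
  fix K :: real
  show "\<exists>D. \<forall>n t. \<bar>t\<bar> < K \<longrightarrow> \<bar>p2 n t - R2 t\<bar> \<le> D * rho n"
  proof (intro exI allI impI)
    fix n and t :: real
    assume t: "\<bar>t\<bar> < K"
    have "t^2 \<le> K^2" using t by (metis abs_ge_zero abs_less_iff less_imp_le power2_abs power_mono order.trans abs_le_square_iff)
    then have "A^3 * t^2 / 2 + 2 * A^2 * \<bar>t\<bar> + A \<le> A^3 * K^2 / 2 + 2 * A^2 * K + A"
      using t A_pos by (intro add_mono divide_right_mono mult_left_mono) auto
    then have "(A^3 * t^2 / 2 + 2 * A^2 * \<bar>t\<bar> + A) * rho n \<le> (A^3 * K^2 / 2 + 2 * A^2 * K + A) * rho n"
      using rho_pos[of n] by (intro mult_right_mono) auto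
    then show "\<bar>p2 n t - R2 t\<bar> \<le> (A^3 * K^2 / 2 + 2 * A^2 * K + A) * rho n"
      using p2_err[of t n] by (simp add: abs_minus_commute)
  qed
qed

lemma deriv_r: "deriv r = R1"
  by (rule ext, rule DERIV_imp_deriv, rule dr)

lemma deriv2_r: "deriv (deriv r) t = R2 t"
  unfolding deriv_r by (rule DERIV_imp_deriv, rule dR1)

lemma R2_0: "R2 0 = - (\<Sum>i. a i ^ 2)"
proof -
  have e: "p2 N 0 = - (\<Sum>i<N. a i ^ 2)" for N
  proof -
    have "p2 N 0 = Ex a N 0 (\<lambda>x. (-1) * (x + 0)^2)" unfolding p2_def by simp
    also have "\<dots> = - (\<Sum>i<N. a i ^ 2)" by (simp only: Ex_cmult Ex_sq) (simp add: atLeast0LessThan)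
    finally show ?thesis .
  qed
  have "(\<lambda>N. p2 N 0) \<longlonglongrightarrow> - (\<Sum>i. a i ^ 2)"
    unfolding e by (intro tendsto_minus summable_LIMSEQ summ_sq)
  then show ?thesis using p2_lim[of 0] LIMSEQ_unique by blast
qed

end


lemma cos_cos: "cos u * cos v = (cos (u - v) + cos (u + v)) / (2::real)"
  by (simp add: cos_add cos_diff)

context sq
begin

definition "S2 = (\<Sum>i. a i ^ 2)"
definition "gg x = 1 - x^2 / S2"
definition "fN N t = p N t + p2 N t / S2"

lemma S2_pos: "0 < S2"
  unfolding S2_def using apos by (intro suminf_pos summ_sq) (simp add: less_imp_neq[symmetric])

lemma fN_Ex: "fN N t = Ex a N 0 (\<lambda>x. gg x * cos (t * x))"
proof -
  have "fN N t = Ex a N 0 (\<lambda>x. cos (t * x) + (- (x^2) * cos (t * x)) / S2)"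
    unfolding fN_def p_def p2_def by (simp only: Ex_add Ex_divide)
  also have "\<dots> = Ex a N 0 (\<lambda>x. gg x * cos (t * x))"
    unfolding gg_def by (simp add: algebra_simps)
  finally show ?thesis .
qed

lemma fN_sq: "(fN N t)^2 = Ex a N 0 (\<lambda>x. Ex a N 0 (\<lambda>y. gg x * gg y * (cos (t * x) * cos (t * y))))"
proof -
  have "(fN N t)^2 = Ex a N 0 (\<lambda>x. gg x * cos (t * x)) * Ex a N 0 (\<lambda>y. gg y * cos (t * y))"
    by (simp add: fN_Ex power2_eq_square)
  also have "\<dots> = Ex a N 0 (\<lambda>x. gg x * cos (t * x) * Ex a N 0 (\<lambda>y. gg y * cos (t * y)))"
    using Ex_cmult[of a N 0 "Ex a N 0 (\<lambda>y. gg y * cos (t * y))" "\<lambda>x. gg x * cos (t * x)"]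
    by (simp add: mult.commute)
  also have "\<dots> = Ex a N 0 (\<lambda>x. Ex a N 0 (\<lambda>y. gg x * cos (t * x) * (gg y * cos (t * y))))"
    by (simp only: Ex_cmult[symmetric])
  also have "\<dots> = Ex a N 0 (\<lambda>x. Ex a N 0 (\<lambda>y. gg x * gg y * (cos (t * x) * cos (t * y))))"
    by (simp add: mult_ac)
  finally show ?thesis .
qed

lemma inner_integral:
  assumes T: "0 < T"
  shows "((\<lambda>t. (1 - t / T) * (gg x * gg y * (cos (t * x) * cos (t * y)))) has_integral
     (gg x * gg y / (2 * T)) * (FT T (x - y) + FT T (x + y))) {0..T}"
proof -
  have "((\<lambda>t. (T - t) * cos ((x - y) * t) + (T - t) * cos ((x + y) * t)) has_integral
      (FT T (x - y) + FT T (x + y))) {0..T}"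
    using T by (intro has_integral_add FT_integral) auto
  then have "((\<lambda>t. (gg x * gg y / (2 * T)) * ((T - t) * cos ((x - y) * t) + (T - t) * cos ((x + y) * t))) has_integral
      (gg x * gg y / (2 * T)) * (FT T (x - y) + FT T (x + y))) {0..T}"
    by (rule has_integral_mult_right)
  moreover have "(\<lambda>t. (gg x * gg y / (2 * T)) * ((T - t) * cos ((x - y) * t) + (T - t) * cos ((x + y) * t)))
     = (\<lambda>t. (1 - t / T) * (gg x * gg y * (cos (t * x) * cos (t * y))))"
  proof
    fix t
    have c: "cos (t * x) * cos (t * y) = (cos ((x - y) * t) + cos ((x + y) * t)) / 2"
      unfolding cos_cos by (simp add: algebra_simps)
    show "(gg x * gg y / (2 * T)) * ((T - t) * cos ((x - y) * t) + (T - t) * cos ((x + y) * t))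
       = (1 - t / T) * (gg x * gg y * (cos (t * x) * cos (t * y)))"
      unfolding c using T by (simp add: field_simps)
  qed
  ultimately show ?thesis by simp
qed

definition "QN N T = T * integral {0..T} (\<lambda>t. (1 - t / T) * (fN N t)^2)"

lemma gg_even: "gg (- x) = gg x" by (simp add: gg_def)

lemma QN_eq:
  assumes T: "0 < T"
  shows "QN N T = Ex a N 0 (\<lambda>x. Ex a N 0 (\<lambda>y. gg x * gg y * FT T (x - y)))"
proof -
  have hi: "((\<lambda>t. (1 - t / T) * (fN N t)^2) has_integral
     Ex a N 0 (\<lambda>x. Ex a N 0 (\<lambda>y. (gg x * gg y / (2 * T)) * (FT T (x - y) + FT T (x + y))))) {0..T}"
  proof -
    have "((\<lambda>t. Ex a N 0 (\<lambda>x. Ex a N 0 (\<lambda>y. (1 - t / T) * (gg x * gg y * (cos (t * x) * cos (t * y)))))) has_integral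
     Ex a N 0 (\<lambda>x. Ex a N 0 (\<lambda>y. (gg x * gg y / (2 * T)) * (FT T (x - y) + FT T (x + y))))) {0..T}"
      by (intro Ex_has_integral inner_integral T)
    moreover have "(\<lambda>t. Ex a N 0 (\<lambda>x. Ex a N 0 (\<lambda>y. (1 - t / T) * (gg x * gg y * (cos (t * x) * cos (t * y))))))
       = (\<lambda>t. (1 - t / T) * (fN N t)^2)"
      by (rule ext) (simp only: fN_sq Ex_cmult)
    ultimately show ?thesis by simp
  qed
  have sym: "Ex a N 0 (\<lambda>y. gg x * gg y * FT T (x + y)) = Ex a N 0 (\<lambda>y. gg x * gg y * FT T (x - y))" for x
    using Ex_neg[of a N 0 "\<lambda>y. gg x * gg y * FT T (x + y)"] by (simp add: gg_even)
  have "QN N T = T * Ex a N 0 (\<lambda>x. Ex a N 0 (\<lambda>y. (gg x * gg y / (2 * T)) * (FT T (x - y) + FT T (x + y))))"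
    unfolding QN_def using hi by (simp add: integral_unique)
  also have "\<dots> = Ex a N 0 (\<lambda>x. Ex a N 0 (\<lambda>y. T * ((gg x * gg y / (2 * T)) * (FT T (x - y) + FT T (x + y)))))"
    by (simp only: Ex_cmult)
  also have "\<dots> = Ex a N 0 (\<lambda>x. (Ex a N 0 (\<lambda>y. gg x * gg y * FT T (x - y)) + Ex a N 0 (\<lambda>y. gg x * gg y * FT T (x + y))) / 2)"
  proof -
    have "T * ((gg x * gg y / (2 * T)) * (FT T (x - y) + FT T (x + y))) =
       (gg x * gg y * FT T (x - y) + gg x * gg y * FT T (x + y)) / 2" for x y
      using T by (simp add: field_simps)
    then show ?thesis by (simp only: Ex_add Ex_divide)
  qed
  also have "\<dots> = Ex a N 0 (\<lambda>x. Ex a N 0 (\<lambda>y. gg x * gg y * FT T (x - y)))"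
    by (simp only: sym) simp
  finally show ?thesis .
qed

end


context sq
begin

lemma Ex_mono_A: "(\<And>x. \<bar>x\<bar> \<le> A \<Longrightarrow> f x \<le> g x) \<Longrightarrow> Ex a N 0 f \<le> Ex a N 0 g"
proof (rule Ex_mono_supp[OF a_nonneg])
  fix x assume h: "\<And>x. \<bar>x\<bar> \<le> A \<Longrightarrow> f x \<le> g x" and x: "\<bar>x\<bar> \<le> (\<Sum>i\<in>{0..<0+N}. a i)"
  show "f x \<le> g x" by (intro h) (use x sum_le_rho[of 0 N] in \<open>simp add: A_def\<close>)
qed

definition "G0 = 1 + A^2 / S2"

lemma gg_bnd: assumes "\<bar>x\<bar> \<le> A" shows "\<bar>gg x\<bar> \<le> G0"
proof -
  have "x^2 \<le> A^2" using assms by (metis abs_ge_zero power2_abs power_mono)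
  then have "x^2 / S2 \<le> A^2 / S2" using S2_pos by (intro divide_right_mono) auto
  moreover have "0 \<le> x^2 / S2" using S2_pos by simp
  ultimately show ?thesis unfolding gg_def G0_def by linarith
qed

lemma QN_upper:
  assumes T: "0 < T" and M1: "1 \<le> M" and TM: "1 / T \<le> rho (M - 1)" and MN: "M \<le> N"
  shows "QN N T \<le> 46 * G0^2 * T^2 / 2^M"
proof -
  have "QN N T \<le> Ex a N 0 (\<lambda>x. Ex a N 0 (\<lambda>y. G0^2 * FT T (x - y)))"
    unfolding QN_eq[OF T]
  proof (intro Ex_mono_A)
    fix x y :: real assume x: "\<bar>x\<bar> \<le> A" and y: "\<bar>y\<bar> \<le> A"
    have "gg x * gg y \<le> \<bar>gg x\<bar> * \<bar>gg y\<bar>" by (simp add: abs_mult[symmetric])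
    also have "\<dots> \<le> G0 * G0" using gg_bnd[OF x] gg_bnd[OF y] by (intro mult_mono) auto
    finally have "gg x * gg y \<le> G0^2" by (simp add: power2_eq_square)
    then show "gg x * gg y * FT T (x - y) \<le> G0^2 * FT T (x - y)"
      by (intro mult_right_mono FT_nonneg)
  qed
  also have "\<dots> = G0^2 * Ez a N 0 (FT T)"
    by (simp only: Ex_cmult Ex_pair)
  also have "\<dots> \<le> G0^2 * (46 * T^2 * 2^0 / 2^M - 45 * T^2 * 3^0 / 3^M)"
    by (intro mult_left_mono clC[OF T M1 TM]) (use MN in auto)
  also have "\<dots> \<le> 46 * G0^2 * T^2 / 2^M"
  proof -
    have "0 \<le> 45 * T^2 * 3^0 / (3::real)^M" by simp
    then have "G0^2 * (46 * T^2 * 2^0 / 2^M - 45 * T^2 * 3^0 / 3^M) \<le> G0^2 * (46 * T^2 / 2^M)"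
      by (intro mult_left_mono) auto
    then show ?thesis by simp
  qed
  finally show ?thesis .
qed

definition "c0 = 1 - (\<Sum>i. a i ^ 4) / S2^2"

lemma summ_4: "summable (\<lambda>i. a i ^ 4)"
proof (rule summable_comparison_test'[of "\<lambda>i. A^2 * a i ^ 2"])
  show "summable (\<lambda>i. A^2 * a i ^ 2)" using summ_sq by (rule summable_mult)
  fix n
  have "a n ^ 2 \<le> A ^ 2" using a_le_A[of n] a_nonneg[of n] by (intro power_mono) auto
  then have "a n ^ 2 * a n ^ 2 \<le> A^2 * a n ^ 2" by (intro mult_right_mono) auto
  then show "norm (a n ^ 4) \<le> A^2 * a n ^ 2" using a_nonneg[of n] by (simp add: power4_eq_xxxx power2_eq_square mult_ac)
qed

lemma a_le_a0: "a i \<le> a 0"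
proof (cases i)
  case (Suc j)
  have "a i \<le> rho i" using rho_split[of i] rho_pos[of "Suc i"] by simp
  also have "\<dots> \<le> rho 1" using rho_anti[of 1 i] Suc by simp
  also have "\<dots> < a 0" using adom[of 0] by simp
  finally show ?thesis by simp
qed simp

lemma c0_pos: "0 < c0"
proof -
  have S4: "(\<Sum>i. a i ^ 4) \<le> (\<Sum>i. a 0 ^ 2 * a i ^ 2)"
  proof (rule suminf_le)
    fix n
    have "a n ^ 2 \<le> a 0 ^ 2" using a_le_a0[of n] a_nonneg[of n] by (intro power_mono) auto
    then have "a n ^ 2 * a n ^ 2 \<le> a 0 ^ 2 * a n ^ 2" by (intro mult_right_mono) auto
    then show "a n ^ 4 \<le> a 0 ^ 2 * a n ^ 2" by (simp add: power4_eq_xxxx power2_eq_square mult_ac)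
  qed (use summ_4 summ_sq summable_mult in auto)
  also have "\<dots> = a 0 ^ 2 * S2" unfolding S2_def by (rule suminf_mult) (rule summ_sq)
  also have "\<dots> < S2 * S2"
  proof -
    have sh: "summable (\<lambda>i. a (Suc i) ^ 2)" using summ_sq summable_Suc_iff[of "\<lambda>i. a i ^ 2"] by simp
    have "S2 = a 0 ^ 2 + (\<Sum>i. a (Suc i) ^ 2)"
      unfolding S2_def using suminf_split_head[OF summ_sq] by simp
    moreover have "0 < (\<Sum>i. a (Suc i) ^ 2)" using apos by (intro suminf_pos sh) (simp add: less_imp_neq[symmetric])
    ultimately have "a 0 ^ 2 < S2" by simp
    then show ?thesis using S2_pos by (intro mult_strict_right_mono) auto
  qed
  finally have "(\<Sum>i. a i ^ 4) / S2^2 < 1" using S2_pos by (simp add: power2_eq_square divide_less_eq)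
  then show ?thesis unfolding c0_def by simp
qed

lemma mom: "Ex a N 0 (\<lambda>x. (gg x)^2) = 1 - 2 * (\<Sum>i<N. a i ^ 2) / S2
   + (3 * (\<Sum>i<N. a i ^ 2)^2 - 2 * (\<Sum>i<N. a i ^ 4)) / S2^2"
proof -
  have "(\<lambda>x. (gg x)^2) = (\<lambda>x. 1 + ((-2 / S2) * (x + 0)^2 + (1 / S2^2) * (x + 0)^4))"
    using S2_pos by (intro ext) (simp add: gg_def power2_eq_square power4_eq_xxxx field_simps)
  then have "Ex a N 0 (\<lambda>x. (gg x)^2) = 1 + ((-2 / S2) * (0 + (\<Sum>i\<in>{0..<0+N}. a i ^ 2)) + (1 / S2^2) *
     (0^4 + 6 * 0^2 * (\<Sum>i\<in>{0..<0+N}. a i ^ 2) + 3 * (\<Sum>i\<in>{0..<0+N}. a i ^ 2)^2 - 2 * (\<Sum>i\<in>{0..<0+N}. a i ^ 4)))"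
    by (simp only: Ex_add Ex_cmult Ex_const Ex_sq Ex_4 power_zero_numeral)
  then show ?thesis by (simp add: atLeast0LessThan field_simps)
qed

lemma mom_ev: "\<forall>\<^sub>F N in sequentially. c0 \<le> Ex a N 0 (\<lambda>x. (gg x)^2)"
proof -
  have "(\<lambda>N. 1 - 2 * (\<Sum>i<N. a i ^ 2) / S2 + (3 * (\<Sum>i<N. a i ^ 2)^2 - 2 * (\<Sum>i<N. a i ^ 4)) / S2^2)
     \<longlonglongrightarrow> 1 - 2 * S2 / S2 + (3 * S2^2 - 2 * (\<Sum>i. a i ^ 4)) / S2^2"
    unfolding S2_def apply (intro tendsto_intros summable_LIMSEQ summ_sq summ_4)
    using S2_pos by (auto simp: S2_def)
  moreover have "1 - 2 * S2 / S2 + (3 * S2^2 - 2 * (\<Sum>i. a i ^ 4)) / S2^2 = 2 * c0"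
    using S2_pos unfolding c0_def by (simp add: field_simps power2_eq_square)
  ultimately have "(\<lambda>N. Ex a N 0 (\<lambda>x. (gg x)^2)) \<longlonglongrightarrow> 2 * c0" by (simp only: mom)
  moreover have "c0 < 2 * c0" using c0_pos by simp
  ultimately show ?thesis by (rule order_tendstoD(1)[THEN eventually_mono]) simp
qed

end


context sq
begin

lemma FT_swap: "FT T (x - y) = FT T (y - x)"
  by (metis FT_even minus_diff_eq)

lemma QN_lower:
  assumes T: "0 < T" and TM: "rho M < 1 / T" and MN: "M \<le> N"
  shows "T^2 / 3 * Ex a N 0 (\<lambda>x. gg x ^ 2) / 2^M - 4 * A^2 / S2^2 \<le> QN N T"
proof -
  define E1 where "E1 = Ex a N 0 (\<lambda>x. Ex a N 0 (\<lambda>y. gg x ^ 2 * FT T (x - y)))"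
  define E1' where "E1' = Ex a N 0 (\<lambda>x. Ex a N 0 (\<lambda>y. gg y ^ 2 * FT T (x - y)))"
  define Er where "Er = Ex a N 0 (\<lambda>x. Ex a N 0 (\<lambda>y. (gg x - gg y) ^ 2 * FT T (x - y)))"
  have pw: "gg x * gg y * FT T (x - y) = (gg x ^ 2 * FT T (x - y) + gg y ^ 2 * FT T (x - y)) / 2
      - (gg x - gg y) ^ 2 * FT T (x - y) / 2" for x y
    by (simp add: power2_eq_square field_simps)
  have W: "QN N T = (E1 + E1') / 2 - Er / 2"
    unfolding QN_eq[OF T] E1_def E1'_def Er_def pw by (simp only: Ex_diff Ex_add Ex_divide)
  have "E1' = Ex a N 0 (\<lambda>y. Ex a N 0 (\<lambda>x. gg y ^ 2 * FT T (x - y)))"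
    unfolding E1'_def by (rule Ex_comm)
  also have "\<dots> = E1"
    unfolding E1_def by (simp only: FT_swap[of T _ "_::real"])
  finally have E1': "E1' = E1" .
  have Er: "Er \<le> 8 * A^2 / S2^2"
  proof -
    have "Er \<le> Ex a N 0 (\<lambda>x. Ex a N 0 (\<lambda>y. 8 * A^2 / S2^2))"
      unfolding Er_def
    proof (intro Ex_mono_A)
      fix x y :: real assume x: "\<bar>x\<bar> \<le> A" and y: "\<bar>y\<bar> \<le> A"
      have e: "(gg x - gg y)^2 = (x + y)^2 / S2^2 * (x - y)^2"
        unfolding gg_def using S2_pos by (simp add: power2_eq_square field_simps)
      have xy: "(x + y)^2 \<le> (2 * A)^2"
      proof -
        have "\<bar>x + y\<bar> \<le> 2 * A" using x y by linarith
        then show ?thesis by (metis abs_ge_zero power2_abs power_mono)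
      qed
      have "(gg x - gg y)^2 * FT T (x - y) = (x + y)^2 / S2^2 * ((x - y)^2 * FT T (x - y))"
        unfolding e by simp
      also have "\<dots> \<le> (2 * A)^2 / S2^2 * 2"
        using xy FT_sq_le[of "x - y" T] S2_pos
        by (intro mult_mono divide_right_mono) (auto intro!: mult_nonneg_nonneg FT_nonneg)
      also have "\<dots> = 8 * A^2 / S2^2" by (simp add: power2_eq_square)
      finally show "(gg x - gg y)^2 * FT T (x - y) \<le> 8 * A^2 / S2^2" .
    qed
    then show ?thesis by (simp only: Ex_const)
  qed
  have E1: "T^2 / 3 * Ex a N 0 (\<lambda>x. gg x ^ 2) / 2^M \<le> E1"
  proof -
    have "Ex a N 0 (\<lambda>x. T^2 / 3 * gg (x + 0) ^ 2) / 2^(M - 0) \<le>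
        Ex a N 0 (\<lambda>x. Ex a N 0 (\<lambda>y. gg (x + 0) ^ 2 * FT T ((x + 0) - (y + 0))))"
    proof (rule Ex_cluster[of a "\<lambda>x y. gg x ^ 2 * FT T (x - y)" M "rho M" "\<lambda>x. T^2 / 3 * gg x ^ 2"])
      show "\<And>i. 0 \<le> a i" by (rule a_nonneg)
      show "\<And>x y. 0 \<le> gg x ^ 2 * FT T (x - y)" by (simp add: FT_nonneg)
      show "\<And>n. (\<Sum>i\<in>{M..<M+n}. a i) \<le> rho M" by (rule sum_le_rho)
      show "T^2 / 3 * gg x ^ 2 \<le> gg x ^ 2 * FT T (x - y)" if "\<bar>x - y\<bar> \<le> 2 * rho M" for x y
      proof -
        have "\<bar>T * (x - y)\<bar> \<le> T * (2 * rho M)" using that T by (simp add: abs_mult)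
        also have "\<dots> \<le> 2" using TM T by (simp add: field_simps)
        finally have "T^2 / 3 \<le> FT T (x - y)" by (rule FT_ge)
        then have "T^2 / 3 * gg x ^ 2 \<le> FT T (x - y) * gg x ^ 2" by (rule mult_right_mono) simp
        then show ?thesis by (simp add: mult.commute)
      qed
    qed (use MN in auto)
    then show ?thesis unfolding E1_def by (simp only: add_0_right diff_zero Ex_cmult)
  qed
  show ?thesis using W E1' Er E1 by simp
qed

lemma p2_cont: "isCont (p2 N) t"
proof -
  have "((\<lambda>t. Ex a N 0 (\<lambda>x. - (x^2) * cos (t * x))) has_real_derivative Ex a N 0 (\<lambda>x. x^2 * (sin (t * x) * x))) (at t)"
    by (rule Ex_deriv) (auto intro!: derivative_eq_intros)
  then show ?thesis unfolding p2_def by (rule DERIV_isCont)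
qed

definition "Q T = T * integral {0..T} (\<lambda>t. (1 - t / T) * (r t + R2 t / S2)^2)"

lemma QN_lim:
  assumes T: "0 < T"
  shows "(\<lambda>N. QN N T) \<longlonglongrightarrow> Q T"
proof -
  define h where "h = (\<lambda>t::real. (1 + A^2 / S2)^2)"
  have cont: "(\<lambda>t. (1 - t / T) * (fN k t)^2) integrable_on {0..T}" for k
  proof -
    have "isCont (\<lambda>t. (1 - t / T) * (p k t + p2 k t / S2)^2) t" for t
      by (intro continuous_intros DERIV_isCont[OF dp] p2_cont) (use S2_pos T in auto)
    then have "continuous_on {0..T} (\<lambda>t. (1 - t / T) * (fN k t)^2)"
      unfolding fN_def by (intro continuous_at_imp_continuous_on) auto
    then show ?thesis by (rule integrable_continuous_interval)
  qed
  have hint: "h integrable_on {0..T}" unfolding h_def by (intro integrable_continuous_interval continuous_on_const)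
  have le: "norm ((1 - t / T) * (fN k t)^2) \<le> h t" if t: "t \<in> {0..T}" for k t
  proof -
    have f: "\<bar>fN k t\<bar> \<le> 1 + A^2 / S2"
    proof -
      have "\<bar>p2 k t / S2\<bar> \<le> A^2 / S2" using p2_bnd[of k t] S2_pos by (simp add: divide_right_mono)
      then show ?thesis unfolding fN_def using p_bnd[of k t] by linarith
    qed
    have "(fN k t)^2 \<le> (1 + A^2 / S2)^2" using f by (metis abs_ge_zero power2_abs power_mono)
    moreover have "0 \<le> 1 - t / T" "1 - t / T \<le> 1" using t T by auto
    ultimately have "(1 - t / T) * (fN k t)^2 \<le> 1 * (1 + A^2 / S2)^2"
      by (intro mult_mono) auto
    moreover have "0 \<le> (1 - t / T) * (fN k t)^2" using \<open>0 \<le> 1 - t / T\<close> by simp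
    ultimately show ?thesis unfolding h_def by simp
  qed
  have conv: "(\<lambda>k. (1 - t / T) * (fN k t)^2) \<longlonglongrightarrow> (1 - t / T) * (r t + R2 t / S2)^2" for t
    unfolding fN_def by (intro tendsto_intros p_lim p2_lim) (use S2_pos in auto)
  have "(\<lambda>k. integral {0..T} (\<lambda>t. (1 - t / T) * (fN k t)^2)) \<longlonglongrightarrow> integral {0..T} (\<lambda>t. (1 - t / T) * (r t + R2 t / S2)^2)"
    by (rule dominated_convergence(2)[OF cont hint le conv])
  then show ?thesis unfolding QN_def Q_def by (intro tendsto_mult_left)
qed

lemma Q_lower:
  assumes T: "0 < T" and TM: "rho M < 1 / T"
  shows "T^2 / 3 * c0 / 2^M - 4 * A^2 / S2^2 \<le> Q T"
proof (rule tendsto_lowerbound[OF QN_lim[OF T]])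
  show "\<forall>\<^sub>F N in sequentially. T^2 / 3 * c0 / 2^M - 4 * A^2 / S2^2 \<le> QN N T"
    using mom_ev eventually_ge_at_top[of M]
  proof eventually_elim
    case (elim N)
    have "T^2 / 3 * c0 / 2^M \<le> T^2 / 3 * Ex a N 0 (\<lambda>x. gg x ^ 2) / 2^M"
      using elim(1) by (intro divide_right_mono mult_left_mono) auto
    then show ?case using QN_lower[OF T TM elim(2)] by linarith
  qed
qed simp

lemma Q_upper:
  assumes T: "0 < T" and M1: "1 \<le> M" and TM: "1 / T \<le> rho (M - 1)"
  shows "Q T \<le> 46 * G0^2 * T^2 / 2^M"
proof (rule tendsto_upperbound[OF QN_lim[OF T]])
  show "\<forall>\<^sub>F N in sequentially. QN N T \<le> 46 * G0^2 * T^2 / 2^M"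
    using eventually_ge_at_top[of M] by eventually_elim (rule QN_upper[OF T M1 TM])
qed simp

end


context sq
begin

lemma rho_strict: "m < n \<Longrightarrow> rho n < rho m"
  using rho_anti[of "Suc m" n] rho_split[of m] apos[of m] by simp

lemma M_unique:
  assumes T: "0 < T" and T0: "1 / T \<le> rho 0"
  shows "\<exists>!M. 1 \<le> M \<and> rho M < 1 / T \<and> 1 / T \<le> rho (M - 1)"
proof -
  have "\<exists>n. rho n < 1 / T"
    using order_tendstoD(2)[OF rho_tendsto, of "1/T"] T by (auto simp: eventually_sequentially)
  then obtain n where n: "rho n < 1 / T" by blast
  define M where "M = (LEAST n. rho n < 1 / T)"
  have M: "rho M < 1 / T" unfolding M_def by (rule LeastI[of _ n]) (rule n)
  have M0: "M \<noteq> 0" using M T0 by (metis not_le)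
  have M1: "1 / T \<le> rho (M - 1)"
  proof -
    have "\<not> rho (M - 1) < 1 / T" using M0 unfolding M_def by (intro not_less_Least) (auto simp: M_def)
    then show ?thesis by simp
  qed
  show ?thesis
  proof (rule ex1I[of _ M])
    show "1 \<le> M \<and> rho M < 1 / T \<and> 1 / T \<le> rho (M - 1)" using M M0 M1 by simp
  next
    fix M' assume H: "1 \<le> M' \<and> rho M' < 1 / T \<and> 1 / T \<le> rho (M' - 1)"
    show "M' = M"
    proof (rule ccontr)
      assume "M' \<noteq> M"
      then consider "M' < M" | "M < M'" by linarith
      then show False
      proof cases
        case 1
        then have "rho (M - 1) \<le> rho M'" by (intro rho_anti) auto
        then show False using H M1 by simp
      next
        case 2
        then have "rho (M' - 1) \<le> rho M" by (intro rho_anti) auto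
        then show False using H M by simp
      qed
    qed
  qed
qed

lemma two_pow_M:
  assumes T: "0 < T" and TM: "1 / T \<le> rho (M - 1)" and M1: "1 \<le> M"
  shows "2^M \<le> 2 * A * T"
proof -
  have "rho (0 + (M - 1)) * 2^(M - 1) \<le> rho 0" by (rule rho_shift)
  then have "1 / T * 2^(M - 1) \<le> A" unfolding A_def using TM
    by (metis add_0 dual_order.trans mult_right_mono zero_le_numeral zero_le_power)
  then have "2^(M - 1) \<le> A * T" using T by (simp add: field_simps)
  moreover have "(2::real)^M = 2 * 2^(M - 1)" using M1 by (metis Suc_diff_le diff_Suc_1 power_Suc)
  ultimately show ?thesis by simp
qed

end

theorem proposition2p1:
  fixes \<alpha> :: "nat \<Rightarrow> real"
  assumes pos: "\<And>n. n \<ge> 1 \<Longrightarrow> \<alpha> n > 0"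
    and mono: "\<And>n. n \<ge> 1 \<Longrightarrow> \<alpha> (Suc n) \<le> \<alpha> n"
    and summ: "summable (\<lambda>n. \<alpha> (Suc n))"
    and dom: "\<And>n. n \<ge> 1 \<Longrightarrow> \<alpha> n > tailsum \<alpha> n"
  defines "r \<equiv> cov \<alpha>"
    and "\<sigma>2 \<equiv> - deriv (deriv (cov \<alpha>)) 0"
  shows "\<exists>C1 C2 T0. C1 > 0 \<and> C2 > 0 \<and> T0 > 0 \<and>
    (\<forall>T\<ge>T0. C1 * T^2 / 2 ^ M_T \<alpha> T
        \<le> T * integral {0..T} (\<lambda>t. (1 - t / T) * (r t + deriv (deriv r) t / \<sigma>2)^2)
      \<and> T * integral {0..T} (\<lambda>t. (1 - t / T) * (r t + deriv (deriv r) t / \<sigma>2)^2)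
        \<le> C2 * T^2 / 2 ^ M_T \<alpha> T)"
proof -
  define a where "a = (\<lambda>n. \<alpha> (Suc n))"
  interpret S: sq a
  proof
    show "0 < a n" for n unfolding a_def by (rule pos) simp
    show "summable a" unfolding a_def by (rule summ)
    show "(\<Sum>i. a (i + Suc n)) < a n" for n
      using dom[of "Suc n"] unfolding tailsum_def a_def by simp
  qed
  have tail: "tailsum \<alpha> n = S.rho n" for n
    unfolding tailsum_def S.rho_def by (simp add: a_def)
  have cov: "cov \<alpha> = S.r" by (rule ext) (simp only: cov_def S.r_def, simp add: a_def)
  have sig: "\<sigma>2 = S.S2"
    unfolding \<sigma>2_def cov S.deriv2_r S.R2_0 S.S2_def by simp
  have Qeq: "T * integral {0..T} (\<lambda>t. (1 - t / T) * (r t + deriv (deriv r) t / \<sigma>2)^2) = S.Q T" for T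
    unfolding r_def cov sig S.Q_def S.deriv2_r ..
  have MT: "1 \<le> M_T \<alpha> T \<and> S.rho (M_T \<alpha> T) < 1 / T \<and> 1 / T \<le> S.rho (M_T \<alpha> T - 1)"
    if "0 < T" "1 / T \<le> S.rho 0" for T
    unfolding M_T_def tail by (rule theI'[OF S.M_unique[OF that]])
  define C1 where "C1 = S.c0 / 6"
  define C2 where "C2 = 46 * S.G0^2"
  define T0 where "T0 = max (1 / S.A) (48 * S.A^3 / (S.c0 * S.S2^2)) + 1"
  have A: "0 < S.A" by (rule S.A_pos)
  have c0: "0 < S.c0" by (rule S.c0_pos)
  have S2: "0 < S.S2" by (rule S.S2_pos)
  have G0: "0 < S.G0" unfolding S.G0_def using A S2 by (simp add: add_pos_nonneg)
  have T0pos: "0 < T0"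
  proof -
    have "0 < 1 / S.A" using A by simp
    moreover have "1 / S.A \<le> max (1 / S.A) (48 * S.A^3 / (S.c0 * S.S2^2))" by simp
    ultimately show ?thesis unfolding T0_def by linarith
  qed
  show ?thesis
  proof (intro exI conjI allI impI)
    show "0 < C1" unfolding C1_def using c0 by simp
    show "0 < C2" unfolding C2_def using G0 by simp
    show "0 < T0" by (rule T0pos)
    fix T assume TT0: "T0 \<le> T"
    have T: "0 < T" using TT0 T0pos by simp
    have T1: "1 / S.A \<le> T" using TT0 unfolding T0_def by simp
    have T2: "48 * S.A^3 / (S.c0 * S.S2^2) \<le> T" using TT0 unfolding T0_def by simp
    have TA: "1 / T \<le> S.rho 0" using T1 A T unfolding S.A_def by (simp add: field_simps)
    define M where "M = M_T \<alpha> T"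
    have M: "1 \<le> M" "S.rho M < 1 / T" "1 / T \<le> S.rho (M - 1)" using MT[OF T TA] unfolding M_def by auto
    have up: "S.Q T \<le> C2 * T^2 / 2^M" unfolding C2_def by (rule S.Q_upper[OF T M(1) M(3)])
    have low: "T^2 / 3 * S.c0 / 2^M - 4 * S.A^2 / S.S2^2 \<le> S.Q T" by (rule S.Q_lower[OF T M(2)])
    have pM: "2^M \<le> 2 * S.A * T" by (rule S.two_pow_M[OF T M(3) M(1)])
    have key: "4 * S.A^2 / S.S2^2 \<le> S.c0 / 6 * T^2 / 2^M"
    proof -
      have "T^2 / (2 * S.A * T) \<le> T^2 / 2^M"
        using pM T A by (intro divide_left_mono) auto
      then have "T / (2 * S.A) \<le> T^2 / 2^M" using T by (simp add: power2_eq_square)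
      moreover have "4 * S.A^2 / S.S2^2 \<le> S.c0 / 6 * (T / (2 * S.A))"
        using T2 c0 S2 A by (simp add: field_simps power2_eq_square power3_eq_cube)
      moreover have "S.c0 / 6 * (T / (2 * S.A)) \<le> S.c0 / 6 * (T^2 / 2^M)"
        using calculation(1) c0 by (intro mult_left_mono) auto
      ultimately have "4 * S.A^2 / S.S2^2 \<le> S.c0 / 6 * (T^2 / 2^M)"
        by linarith
      then show ?thesis by simp
    qed
    define V where "V = S.c0 * T^2 / 2^M"
    have e1: "T^2 / 3 * S.c0 / 2^M = V / 3" "S.c0 / 6 * T^2 / 2^M = V / 6" "C1 * T^2 / 2^M = V / 6"
      unfolding V_def C1_def by (simp_all add: field_simps)
    have "C1 * T^2 / 2^M \<le> S.Q T"
      using low key unfolding e1 by linarith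
    then show "C1 * T^2 / 2 ^ M_T \<alpha> T \<le> T * integral {0..T} (\<lambda>t. (1 - t / T) * (r t + deriv (deriv r) t / \<sigma>2)^2)"
      unfolding Qeq M_def .
    show "T * integral {0..T} (\<lambda>t. (1 - t / T) * (r t + deriv (deriv r) t / \<sigma>2)^2) \<le> C2 * T^2 / 2 ^ M_T \<alpha> T"
      unfolding Qeq M_def[symmetric] by (rule up)
  qed
qed

end
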